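(* Let $n,N\ge1$, $T>0$, $\mathbf c\in\mathbb R^n_+$, $\mathbf d\in\mathbb R^n_+$, $C\ge0$ with $d_{i+1}-d_i\le c_{i+1}$ for $i\in[n-1]$, let $\mathcal U=\{\mathbf u:\mathbf u^L\le\mathbf u\le\mathbf u^U\}$ with $0\le u^L_i<u^U_i<\infty$, and let $\widehat{\mathbf u}^1,\dots,\widehat{\mathbf u}^N\in\mathcal U$. For fixed $\bar{\mathbf s}\in\mathcal S$ and $\epsilon\ge0$, $\sup_{\mathbb Q\in\mathcal D_1(\widehat{\mathbb P}^N,\epsilon)}\mathbb E_{\mathbb Q}[f(\bar{\mathbf s},\mathbf u)]$ equals the optimal value of the linear program $$\max_{\mathbf p,\mathbf q,\mathbf r}\ \frac1N\sum_{j=1}^N\sum_{i=1}^n\sum_{\ell=i}^{n+1}\pi_{i\ell}\Big[(u^L_i-\widehat u^j_i)q_{i\ell j}+(u^U_i-\widehat u^j_i)r_{i\ell j}+\Big(\sum_{k=1}^ip_{k\ell j}\Big)(\widehat u^j_i-\bar s_i)\Big]$$ subject to $\frac1N\sum_{j=1}^N\sum_{i=1}^n\sum_{\ell=i}^{n+1}\big[(\widehat u^j_i-u^L_i)q_{i\ell j}+(u^U_i-\widehat u^j_i)r_{i\ell j}\big]\le\epsilon$; $\sum_{\ell=i}^{n+1}\sum_{k=1}^ip_{k\ell j}=1$ for all $i\in[n],j\in[N]$; $\sum_{k=1}^ip_{k\ell j}-q_{i\ell j}-r_{i\ell j}\ge0$ for all $i\in[n],\ell\in[i,n+1]_{\mathbb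 Z},j\in[N]$; and $p_{i\ell j},q_{i\ell j},r_{i\ell j}\ge0$ for all $i\in[n],\ell\in[i,n+1]_{\mathbb Z},j\in[N]$. Let $\{p^\star_{k\ell j},q^\star_{i\ell j},r^\star_{i\ell j}\}$ be an optimal solution and let $\mathcal T=\{\mathbf t\in\{0,1\}^{(n+1)(n+2)/2}:\sum_{k=1}^i\sum_{\ell=i}^{n+1}t_{k\ell}=1\ \forall i\in[n+1]\}$, where $\mathbf t$ is indexed by pairs $(k,\ell)$ with $1\le k\le\ell\le n+1$. Then for each $j\in[N]$ there exists a probability distribution $\mathbb P^j_{\mathbf t}$ on $\mathcal T$ with $\mathbb P^j_{\mathbf t}\{t_{k\ell}=1\}=p^\star_{k\ell j}$ for all $k\in[n]$, $\ell\in[k,n+1]_{\mathbb Z}$. Moreover, defining, with the convention $0/0=0$, $$u_{i\ell j}=\widehat u^j_i+\frac{q^\star_{i\ell j}(u^L_i-\widehat u^j_i)}{\sum_{k=1}^ip^\star_{k\ell j}}+\frac{r^\star_{i\ell j}(u^U_i-\widehat u^j_i)}{\sum_{k=1}^ip^\star_{k\ell j}},\qquad u^j_i(\boldsymbol\tau)=\sum_{\ell=i}^{n+1}\Big(\sum_{k=1}^i\tau_{k\ell}\Big)u_{i\ell j}$$ for $i\in[n]$, $j\in[N]$, $\boldsymbol\tau\in\mathcal T$, and $\mathbb Q^\star=\frac1N\sum_{j=1}^N\sum_{\boldsymbol\tau\in\mathcal T}\mathbb P^j_{\mathbf t}\{\mathbf t=\boldsymbol\tau\}\delta_{\mathbf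 u^j(\boldsymbol\tau)}$, we have $\mathbb Q^\star\in\mathcal D_1(\widehat{\mathbb P}^N,\epsilon)$ and $\mathbb E_{\mathbb Q^\star}[f(\bar{\mathbf s},\mathbf u)]=\sup_{\mathbb Q\in\mathcal D_1(\widehat{\mathbb P}^N,\epsilon)}\mathbb E_{\mathbb Q}[f(\bar{\mathbf s},\mathbf u)]$.
   Context: Notation: $[m]=\{1,\dots,m\}$, $[i,j]_{\mathbb Z}=\{i,\dots,j\}$; $\delta_{\mathbf x}$ is the Dirac measure at $\mathbf x$. $\mathcal S=\{\mathbf s\in\mathbb R^n:\mathbf s\ge0,\sum_is_i\le T\}$. $f(\mathbf s,\mathbf u)$ is the optimal value of $\min_{\mathbf w\in\mathbb R^{n+1},\mathbf v\in\mathbb R^n}\sum_{i=1}^n(c_iw_i+d_iv_i)+Cw_{n+1}$ s.t. $w_i-v_{i-1}=u_{i-1}+w_{i-1}-s_{i-1}$ ($i\in[2,n+1]_{\mathbb Z}$), $\mathbf w\ge0,w_1=0,\mathbf v\ge0$. $d_1(\mathbb Q_1,\mathbb Q_2)=\inf_\Pi\mathbb E_\Pi\|\mathbf u_1-\mathbf u_2\|_1$ over couplings $\Pi$; $\widehat{\mathbb P}^N=\frac1N\sum_j\delta_{\widehat{\mathbf u}^j}$; $\mathcal D_1(\widehat{\mathbb P}^N,\epsilon)$ is the set of probability distributions $\mathbb Q$ on $\mathcal U$ with $d_1(\mathbb Q,\widehat{\mathbb P}^N)\le\epsilon$. Constants: for $i\in[n]$, $\pi_{i\ell}=-d_\ell+\sum_{q=i+1}^\ell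 c_q$ for $\ell\in[i,n]_{\mathbb Z}$ and $\pi_{i,n+1}=C+\sum_{q=i+1}^nc_q$. *)

theory Defs
  imports "HOL-Probability.Probability"
begin

text \<open>Vectors in R^n are extensional functions on {1..n} (elements of the product
  measurable space). Index conventions follow the paper (1-based).\<close>

definition Mn :: "nat \<Rightarrow> (nat \<Rightarrow> real) measure" where
  "Mn n = PiM {1..n} (\<lambda>_. borel)"

definition Uset :: "nat \<Rightarrow> (nat \<Rightarrow> real) \<Rightarrow> (nat \<Rightarrow> real) \<Rightarrow> (nat \<Rightarrow> real) set" where
  "Uset n uL uU = PiE {1..n} (\<lambda>i. {uL i..uU i})"

definition fval :: "nat \<Rightarrow> (nat \<Rightarrow> real) \<Rightarrow> (nat \<Rightarrow> real) \<Rightarrow> real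
    \<Rightarrow> (nat \<Rightarrow> real) \<Rightarrow> (nat \<Rightarrow> real) \<Rightarrow> real" where
  "fval n c d C s u = Inf {(\<Sum>i=1..n. c i * w i + d i * v i) + C * w (n+1) | w v.
      (\<forall>i\<in>{2..n+1}. w i - v (i-1) = u (i-1) + w (i-1) - s (i-1)) \<and>
      (\<forall>i\<in>{1..n+1}. w i \<ge> 0) \<and> w 1 = 0 \<and> (\<forall>i\<in>{1..n}. v i \<ge> 0)}"

definition coupling :: "nat \<Rightarrow> (nat \<Rightarrow> real) measure \<Rightarrow> (nat \<Rightarrow> real) measure
    \<Rightarrow> ((nat \<Rightarrow> real) \<times> (nat \<Rightarrow> real)) measure \<Rightarrow> bool" where
  "coupling n Q1 Q2 W \<longleftrightarrow> prob_space W \<and> sets W = sets (Mn n \<Otimes>\<^sub>M Mn n) \<and>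
      distr W (Mn n) fst = Q1 \<and> distr W (Mn n) snd = Q2"

definition wass1 :: "nat \<Rightarrow> (nat \<Rightarrow> real) measure \<Rightarrow> (nat \<Rightarrow> real) measure \<Rightarrow> ennreal" where
  "wass1 n Q1 Q2 = (INF W\<in>{W. coupling n Q1 Q2 W}.
      \<integral>\<^sup>+ x. ennreal (\<Sum>i=1..n. \<bar>fst x i - snd x i\<bar>) \<partial>W)"

text \<open>Empirical distribution (1/N) sum_j delta_{uhat^j}; uh j i is component i of sample j.\<close>
definition empirical :: "nat \<Rightarrow> nat \<Rightarrow> (nat \<Rightarrow> nat \<Rightarrow> real) \<Rightarrow> (nat \<Rightarrow> real) measure" where
  "empirical n N uh =
     distr (measure_pmf (map_pmf (\<lambda>j. restrict (uh j) {1..n}) (pmf_of_set {1..N}))) (Mn n) (\<lambda>x. x)"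

definition Dball :: "nat \<Rightarrow> (nat \<Rightarrow> real) \<Rightarrow> (nat \<Rightarrow> real) \<Rightarrow> nat \<Rightarrow> (nat \<Rightarrow> nat \<Rightarrow> real)
    \<Rightarrow> real \<Rightarrow> (nat \<Rightarrow> real) measure set" where
  "Dball n uL uU N uh eps = {Q. prob_space Q \<and> sets Q = sets (Mn n) \<and>
      emeasure Q (Uset n uL uU) = 1 \<and> wass1 n Q (empirical n N uh) \<le> ennreal eps}"

definition pic :: "nat \<Rightarrow> (nat \<Rightarrow> real) \<Rightarrow> (nat \<Rightarrow> real) \<Rightarrow> real \<Rightarrow> nat \<Rightarrow> nat \<Rightarrow> real" where
  "pic n c d C i l = (if l \<le> n then - d l + (\<Sum>q=i+1..l. c q) else C + (\<Sum>q=i+1..n. c q))"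

definition Psum :: "(nat \<Rightarrow> nat \<Rightarrow> nat \<Rightarrow> real) \<Rightarrow> nat \<Rightarrow> nat \<Rightarrow> nat \<Rightarrow> real" where
  "Psum p i l j = (\<Sum>k=1..i. p k l j)"

definition LP_feasible :: "nat \<Rightarrow> nat \<Rightarrow> (nat \<Rightarrow> real) \<Rightarrow> (nat \<Rightarrow> real) \<Rightarrow> (nat \<Rightarrow> nat \<Rightarrow> real)
    \<Rightarrow> real \<Rightarrow> (nat \<Rightarrow> nat \<Rightarrow> nat \<Rightarrow> real) \<Rightarrow> (nat \<Rightarrow> nat \<Rightarrow> nat \<Rightarrow> real)
    \<Rightarrow> (nat \<Rightarrow> nat \<Rightarrow> nat \<Rightarrow> real) \<Rightarrow> bool" where
  "LP_feasible n N uL uU uh eps p q r \<longleftrightarrow>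
     (1 / real N) * (\<Sum>j=1..N. \<Sum>i=1..n. \<Sum>l=i..n+1.
        (uh j i - uL i) * q i l j + (uU i - uh j i) * r i l j) \<le> eps \<and>
     (\<forall>i\<in>{1..n}. \<forall>j\<in>{1..N}. (\<Sum>l=i..n+1. Psum p i l j) = 1) \<and>
     (\<forall>i\<in>{1..n}. \<forall>l\<in>{i..n+1}. \<forall>j\<in>{1..N}. Psum p i l j - q i l j - r i l j \<ge> 0) \<and>
     (\<forall>i\<in>{1..n}. \<forall>l\<in>{i..n+1}. \<forall>j\<in>{1..N}. p i l j \<ge> 0 \<and> q i l j \<ge> 0 \<and> r i l j \<ge> 0)"

definition LP_obj :: "nat \<Rightarrow> nat \<Rightarrow> (nat \<Rightarrow> real) \<Rightarrow> (nat \<Rightarrow> real) \<Rightarrow> real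
    \<Rightarrow> (nat \<Rightarrow> real) \<Rightarrow> (nat \<Rightarrow> real) \<Rightarrow> (nat \<Rightarrow> nat \<Rightarrow> real) \<Rightarrow> (nat \<Rightarrow> real)
    \<Rightarrow> (nat \<Rightarrow> nat \<Rightarrow> nat \<Rightarrow> real) \<Rightarrow> (nat \<Rightarrow> nat \<Rightarrow> nat \<Rightarrow> real)
    \<Rightarrow> (nat \<Rightarrow> nat \<Rightarrow> nat \<Rightarrow> real) \<Rightarrow> real" where
  "LP_obj n N c d C uL uU uh s p q r =
     (1 / real N) * (\<Sum>j=1..N. \<Sum>i=1..n. \<Sum>l=i..n+1. pic n c d C i l *
        ((uL i - uh j i) * q i l j + (uU i - uh j i) * r i l j + Psum p i l j * (uh j i - s i)))"

definition LP_val :: "nat \<Rightarrow> nat \<Rightarrow> (nat \<Rightarrow> real) \<Rightarrow> (nat \<Rightarrow> real) \<Rightarrow> real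
    \<Rightarrow> (nat \<Rightarrow> real) \<Rightarrow> (nat \<Rightarrow> real) \<Rightarrow> (nat \<Rightarrow> nat \<Rightarrow> real) \<Rightarrow> (nat \<Rightarrow> real) \<Rightarrow> real \<Rightarrow> real" where
  "LP_val n N c d C uL uU uh s eps = Sup {LP_obj n N c d C uL uU uh s p q r | p q r.
      LP_feasible n N uL uU uh eps p q r}"

definition Pairs :: "nat \<Rightarrow> (nat \<times> nat) set" where
  "Pairs n = {(k, l). 1 \<le> k \<and> k \<le> l \<and> l \<le> n + 1}"

definition Tset :: "nat \<Rightarrow> (nat \<times> nat \<Rightarrow> nat) set" where
  "Tset n = {t \<in> PiE (Pairs n) (\<lambda>_. {0, 1}).
      \<forall>i\<in>{1..n+1}. (\<Sum>k=1..i. \<Sum>l=i..n+1. t (k, l)) = 1}"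

definition has_marginals :: "nat \<Rightarrow> (nat \<Rightarrow> nat \<Rightarrow> nat \<Rightarrow> real) \<Rightarrow> nat \<Rightarrow> (nat \<times> nat \<Rightarrow> nat) pmf \<Rightarrow> bool" where
  "has_marginals n p j Pt \<longleftrightarrow> set_pmf Pt \<subseteq> Tset n \<and>
     (\<forall>k\<in>{1..n}. \<forall>l\<in>{k..n+1}. measure_pmf.prob Pt {t. t (k, l) = 1} = p k l j)"

text \<open>u_{ilj} (division by zero yields 0 in Isabelle, matching the convention 0/0 = 0).\<close>
definition ustar :: "(nat \<Rightarrow> real) \<Rightarrow> (nat \<Rightarrow> real) \<Rightarrow> (nat \<Rightarrow> nat \<Rightarrow> real)
    \<Rightarrow> (nat \<Rightarrow> nat \<Rightarrow> nat \<Rightarrow> real) \<Rightarrow> (nat \<Rightarrow> nat \<Rightarrow> nat \<Rightarrow> real)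
    \<Rightarrow> (nat \<Rightarrow> nat \<Rightarrow> nat \<Rightarrow> real) \<Rightarrow> nat \<Rightarrow> nat \<Rightarrow> nat \<Rightarrow> real" where
  "ustar uL uU uh p q r i l j = uh j i + q i l j * (uL i - uh j i) / Psum p i l j
      + r i l j * (uU i - uh j i) / Psum p i l j"

definition uvec :: "nat \<Rightarrow> (nat \<Rightarrow> real) \<Rightarrow> (nat \<Rightarrow> real) \<Rightarrow> (nat \<Rightarrow> nat \<Rightarrow> real)
    \<Rightarrow> (nat \<Rightarrow> nat \<Rightarrow> nat \<Rightarrow> real) \<Rightarrow> (nat \<Rightarrow> nat \<Rightarrow> nat \<Rightarrow> real)
    \<Rightarrow> (nat \<Rightarrow> nat \<Rightarrow> nat \<Rightarrow> real) \<Rightarrow> nat \<Rightarrow> (nat \<times> nat \<Rightarrow> nat) \<Rightarrow> (nat \<Rightarrow> real)" where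
  "uvec n uL uU uh p q r j \<tau> = (\<lambda>i\<in>{1..n}. \<Sum>l=i..n+1.
      (\<Sum>k=1..i. real (\<tau> (k, l))) * ustar uL uU uh p q r i l j)"

definition Qstar :: "nat \<Rightarrow> nat \<Rightarrow> (nat \<Rightarrow> real) \<Rightarrow> (nat \<Rightarrow> real) \<Rightarrow> (nat \<Rightarrow> nat \<Rightarrow> real)
    \<Rightarrow> (nat \<Rightarrow> nat \<Rightarrow> nat \<Rightarrow> real) \<Rightarrow> (nat \<Rightarrow> nat \<Rightarrow> nat \<Rightarrow> real)
    \<Rightarrow> (nat \<Rightarrow> nat \<Rightarrow> nat \<Rightarrow> real) \<Rightarrow> (nat \<Rightarrow> (nat \<times> nat \<Rightarrow> nat) pmf) \<Rightarrow> (nat \<Rightarrow> real) measure" where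
  "Qstar n N uL uU uh p q r Pt = distr (measure_pmf
      (bind_pmf (pmf_of_set {1..N}) (\<lambda>j. map_pmf (uvec n uL uU uh p q r j) (Pt j)))) (Mn n) (\<lambda>x. x)"

end

theory Submission
  imports Defs
begin

lemma distr_pmf_fix:
  assumes "set_pmf P \<subseteq> space N"
  obtains g where "g \<in> measurable (measure_pmf P) N" "\<forall>x\<in>set_pmf P. g x = x"
    "distr (measure_pmf P) N (\<lambda>x. x) = distr (measure_pmf P) N g"
proof -
  obtain x0 where x0: "x0 \<in> set_pmf P" using set_pmf_not_empty[of P] by blast
  define g where "g x = (if x \<in> space N then x else x0)" for x
  have m: "g \<in> measurable (measure_pmf P) N" using x0 assms by (auto simp: g_def)
  have e: "\<forall>x\<in>set_pmf P. g x = x" using assms by (auto simp: g_def)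
  have "distr (measure_pmf P) N (\<lambda>x. x) = distr (measure_pmf P) N g"
    unfolding distr_def
  proof (intro measure_of_eq sets.space_closed)
    fix a assume "a \<in> sigma_sets (space N) (sets N)"
    hence a: "a \<in> sets N" by (simp add: sets.sigma_sets_eq)
    show "emeasure (measure_pmf P) ((\<lambda>x. x) -` a \<inter> space (measure_pmf P)) =
          emeasure (measure_pmf P) (g -` a \<inter> space (measure_pmf P))"
      by (intro emeasure_eq_AE) (auto simp: AE_measure_pmf_iff e)
  qed
  with m e that show ?thesis by blast
qed


primrec gW :: "(nat \<Rightarrow> real) \<Rightarrow> (nat \<Rightarrow> real) \<Rightarrow> nat \<Rightarrow> real" where
  "gW s u 0 = 0"
| "gW s u (Suc i) = max 0 (gW s u i) + u (Suc i) - s (Suc i)"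

definition lg :: "nat \<Rightarrow> (nat \<Rightarrow> real) \<Rightarrow> (nat \<Rightarrow> real) \<Rightarrow> nat \<Rightarrow> nat" where
  "lg n s u i = (LEAST l. i \<le> l \<and> (n+1 \<le> l \<or> gW s u (min l n) \<le> 0))"

lemma lg_bounds: assumes "i \<le> n+1" shows "i \<le> lg n s u i \<and> lg n s u i \<le> n+1"
proof -
  let ?P = "\<lambda>l. i \<le> l \<and> (n+1 \<le> l \<or> gW s u (min l n) \<le> 0)"
  have "?P (n+1)" using assms by simp
  have 1: "?P (LEAST l. ?P l)" using \<open>?P (n+1)\<close> by (rule LeastI)
  have 2: "(LEAST l. ?P l) \<le> n+1" using \<open>?P (n+1)\<close> by (rule Least_le)
  show ?thesis using 1 2 unfolding lg_def by simp
qed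

lemma lg_le0: assumes "i \<le> n" "gW s u i \<le> 0" shows "lg n s u i = i"
  unfolding lg_def using assms by (intro Least_equality) auto

lemma lg_pos: assumes "i \<le> n" "gW s u i > 0" shows "lg n s u i = lg n s u (Suc i)"
proof -
  have "(\<lambda>l. i \<le> l \<and> (n+1 \<le> l \<or> gW s u (min l n) \<le> 0)) =
        (\<lambda>l. Suc i \<le> l \<and> (n+1 \<le> l \<or> gW s u (min l n) \<le> 0))"
  proof
    fix l show "(i \<le> l \<and> (n+1 \<le> l \<or> gW s u (min l n) \<le> 0)) =
        (Suc i \<le> l \<and> (n+1 \<le> l \<or> gW s u (min l n) \<le> 0))"
      using assms by (cases "l = i") auto
  qed
  thus ?thesis unfolding lg_def by simp
qed

lemma lg_0: "lg n s u 0 = 0"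
  unfolding lg_def by (intro Least_equality) auto

definition valid :: "nat \<Rightarrow> (nat \<Rightarrow> nat) \<Rightarrow> bool" where
  "valid n \<sigma> \<longleftrightarrow> (\<forall>i\<in>{1..n}. i \<le> \<sigma> i \<and> \<sigma> i \<le> n+1) \<and> (\<forall>i\<in>{1..n-1}. \<sigma> i = i \<or> \<sigma> i = \<sigma> (Suc i))"

lemma valid_lg: "valid n (lg n s u)"
proof -
  have A: "\<forall>i\<in>{1..n}. i \<le> lg n s u i \<and> lg n s u i \<le> n+1" using lg_bounds by auto
  have B: "\<forall>i\<in>{1..n-1}. lg n s u i = i \<or> lg n s u i = lg n s u (Suc i)"
  proof
    fix i assume "i \<in> {1..n-1}"
    hence "i \<le> n" by auto
    thus "lg n s u i = i \<or> lg n s u i = lg n s u (Suc i)"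
      using lg_le0[of i n s u] lg_pos[of i n s u] by (cases "gW s u i \<le> 0") auto
  qed
  show ?thesis using A B unfolding valid_def by blast
qed

definition dfeas :: "nat \<Rightarrow> (nat \<Rightarrow> real) \<Rightarrow> (nat \<Rightarrow> real) \<Rightarrow> real \<Rightarrow> (nat \<Rightarrow> real) \<Rightarrow> bool" where
  "dfeas n c d C y \<longleftrightarrow> (\<forall>i\<in>{1..n}. - d i \<le> y i) \<and> (\<forall>i\<in>{1..n-1}. y i \<le> c (Suc i) + y (Suc i)) \<and> y n \<le> C"

lemma pic_ge:
  assumes c: "\<forall>i\<in>{1..n}. c i \<ge> 0" and d: "\<forall>i\<in>{1..n}. d i \<ge> 0" and C: "C \<ge> 0"
    and dc: "\<forall>i\<in>{1..n-1}. d (i+1) - d i \<le> c (i+1)"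
    and i: "i \<in> {1..n}" and l: "i \<le> l" "l \<le> n+1"
  shows "- d i \<le> pic n c d C i l"
proof (cases "l \<le> n")
  case True
  have "\<forall>l. i \<le> l \<longrightarrow> l \<le> n \<longrightarrow> - d i \<le> - d l + (\<Sum>q=i+1..l. c q)"
  proof
    fix l show "i \<le> l \<longrightarrow> l \<le> n \<longrightarrow> - d i \<le> - d l + (\<Sum>q=i+1..l. c q)"
    proof (induction l)
      case 0 thus ?case by simp
    next
      case (Suc l)
      show ?case
      proof (intro impI)
        assume a: "i \<le> Suc l" "Suc l \<le> n"
        show "- d i \<le> - d (Suc l) + (\<Sum>q=i+1..Suc l. c q)"
        proof (cases "i = Suc l")
          case True thus ?thesis by simp
        next
          case False
          hence il: "i \<le> l" using a by simp
          have "l \<in> {1..n-1}" using il i a by auto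
          hence "d (Suc l) - d l \<le> c (Suc l)" using dc by auto
          moreover have "(\<Sum>q=i+1..Suc l. c q) = (\<Sum>q=i+1..l. c q) + c (Suc l)"
            using il by simp
          ultimately show ?thesis using Suc.IH il a by simp
        qed
      qed
    qed
  qed
  thus ?thesis using True l unfolding pic_def by simp
next
  case False
  have "0 \<le> (\<Sum>q=i+1..n. c q)" using c i by (intro sum_nonneg) auto
  moreover have "d i \<ge> 0" using d i by auto
  ultimately show ?thesis using False C unfolding pic_def by auto
qed

lemma pic_step:
  assumes "i \<in> {1..n-1}" "i+1 \<le> l" "l \<le> n+1"
  shows "pic n c d C i l = c (Suc i) + pic n c d C (Suc i) l"
proof (cases "l \<le> n")
  case True
  have "(\<Sum>q=i+1..l. c q) = c (Suc i) + (\<Sum>q=Suc i+1..l. c q)"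
    using assms by (simp add: sum.atLeast_Suc_atMost)
  thus ?thesis using True unfolding pic_def by simp
next
  case False
  have "Suc i \<le> n" using assms by auto
  hence "(\<Sum>q=i+1..n. c q) = c (Suc i) + (\<Sum>q=Suc i+1..n. c q)"
    by (simp add: sum.atLeast_Suc_atMost)
  thus ?thesis using False unfolding pic_def by simp
qed

lemma pic_ii: "i \<le> n \<Longrightarrow> pic n c d C i i = - d i"
  unfolding pic_def by simp

lemma pic_n1: "pic n c d C n (n+1) = C"
  unfolding pic_def by simp

lemma valid_dfeas:
  assumes c: "\<forall>i\<in>{1..n}. c i \<ge> 0" and d: "\<forall>i\<in>{1..n}. d i \<ge> 0" and C: "C \<ge> 0"
    and dc: "\<forall>i\<in>{1..n-1}. d (i+1) - d i \<le> c (i+1)" and n: "n \<ge> 1"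
    and v: "valid n \<sigma>"
  shows "dfeas n c d C (\<lambda>i. pic n c d C i (\<sigma> i))"
  unfolding dfeas_def
proof (intro conjI ballI)
  fix i assume "i \<in> {1..n}" thus "- d i \<le> pic n c d C i (\<sigma> i)"
    using pic_ge[OF c d C dc] v unfolding valid_def by auto
next
  fix i assume i: "i \<in> {1..n-1}"
  have s1: "Suc i \<le> \<sigma> (Suc i)" "\<sigma> (Suc i) \<le> n+1" using v i unfolding valid_def by auto
  have s0: "\<sigma> i = i \<or> \<sigma> i = \<sigma> (Suc i)" using v i unfolding valid_def by auto
  show "pic n c d C i (\<sigma> i) \<le> c (Suc i) + pic n c d C (Suc i) (\<sigma> (Suc i))"
  proof (cases "\<sigma> i = i")
    case True
    have "- d (Suc i) \<le> pic n c d C (Suc i) (\<sigma> (Suc i))"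
      using pic_ge[OF c d C dc, of "Suc i" "\<sigma> (Suc i)"] i s1 by auto
    moreover have "d (i+1) - d i \<le> c (i+1)" using dc i by auto
    moreover have "i \<le> n" using i by auto
    hence "pic n c d C i i = - d i" by (rule pic_ii)
    ultimately show ?thesis using True by simp
  next
    case False
    hence "\<sigma> i = \<sigma> (Suc i)" using s0 by simp
    thus ?thesis using pic_step[of i n "\<sigma> (Suc i)" c d C] i s1 by simp
  qed
next
  have "n \<le> \<sigma> n" "\<sigma> n \<le> n+1" using v n unfolding valid_def by auto
  hence "\<sigma> n = n \<or> \<sigma> n = n+1" by auto
  moreover have dn: "d n \<ge> 0" using d n by auto
  moreover have "pic n c d C n n = - d n" by (rule pic_ii) simp
  ultimately show "pic n c d C n (\<sigma> n) \<le> C"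
    using pic_n1[of n c d C] C by auto
qed

lemma sum_shift1: "n \<ge> 1 \<Longrightarrow> (\<Sum>i=1..n. g i) = g 1 + (\<Sum>i=1..n-1. g (Suc i)) "
proof (induction n)
  case 0 thus ?case by simp
next
  case (Suc n)
  show ?case
  proof (cases "n = 0")
    case True thus ?thesis by simp
  next
    case False
    have "(\<Sum>i=1..n. g (Suc i)) = (\<Sum>i=1..n-1. g (Suc i)) + g (Suc n)"
      using False by (cases n) auto
    thus ?thesis using Suc False by (simp add: add.assoc)
  qed
qed

lemma slack_id:
  fixes w v y u s c d :: "nat \<Rightarrow> real"
  assumes n: "n \<ge> 1" and w1: "w 1 = 0"
    and eq: "\<forall>i\<in>{1..n}. u i - s i = w (Suc i) - v i - w i"
  shows "(\<Sum>i=1..n. c i * w i + d i * v i) + C * w (n+1) - (\<Sum>i=1..n. y i * (u i - s i))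
       = (\<Sum>i=1..n-1. (c (Suc i) - y i + y (Suc i)) * w (Suc i)) + (C - y n) * w (n+1)
         + (\<Sum>i=1..n. (d i + y i) * v i)"
proof -
  have A: "(\<Sum>i=1..n. y i * (u i - s i)) = (\<Sum>i=1..n. y i * w (Suc i) - y i * v i - y i * w i)"
  proof (intro sum.cong refl)
    fix i assume "i \<in> {1..n}"
    hence h: "u i - s i = w (Suc i) - v i - w i" using eq by blast
    have "y i * (u i - s i) = y i * (w (Suc i) - v i - w i)" by (simp only: h)
    also have "\<dots> = y i * w (Suc i) - y i * v i - y i * w i" by (simp add: algebra_simps)
    finally show "y i * (u i - s i) = y i * w (Suc i) - y i * v i - y i * w i" .
  qed
  have B: "(\<Sum>i=1..n. y i * w (Suc i)) = (\<Sum>i=1..n-1. y i * w (Suc i)) + y n * w (n+1)"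
    using n by (cases n) auto
  have C1: "(\<Sum>i=1..n. c i * w i) = (\<Sum>i=1..n-1. c (Suc i) * w (Suc i))"
    using sum_shift1[OF n, of "\<lambda>i. c i * w i"] w1 by simp
  have C2: "(\<Sum>i=1..n. y i * w i) = (\<Sum>i=1..n-1. y (Suc i) * w (Suc i))"
    using sum_shift1[OF n, of "\<lambda>i. y i * w i"] w1 by simp
  show ?thesis
    unfolding A using B C1 C2
    by (simp add: sum.distrib sum_subtractf algebra_simps)
qed


lemma weak_dual:
  assumes n: "n \<ge> 1" and y: "dfeas n c d C y"
    and f1: "\<forall>i\<in>{2..n+1}. w i - v (i-1) = u (i-1) + w (i-1) - s (i-1)"
    and f2: "\<forall>i\<in>{1..n+1}. w i \<ge> 0" and f3: "w 1 = 0" and f4: "\<forall>i\<in>{1..n}. v i \<ge> 0"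
  shows "(\<Sum>i=1..n. y i * (u i - s i)) \<le> (\<Sum>i=1..n. c i * w i + d i * v i) + C * w (n+1)"
proof -
  have eq: "\<forall>i\<in>{1..n}. u i - s i = w (Suc i) - v i - w i"
  proof
    fix i assume "i \<in> {1..n}"
    hence "Suc i \<in> {2..n+1}" by auto
    thus "u i - s i = w (Suc i) - v i - w i" using f1 by fastforce
  qed
  have "0 \<le> (\<Sum>i=1..n-1. (c (Suc i) - y i + y (Suc i)) * w (Suc i)) + (C - y n) * w (n+1)
         + (\<Sum>i=1..n. (d i + y i) * v i)"
  proof -
    have "0 \<le> (\<Sum>i=1..n-1. (c (Suc i) - y i + y (Suc i)) * w (Suc i))"
    proof (intro sum_nonneg mult_nonneg_nonneg)
      fix i assume i: "i \<in> {1..n-1}"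
      have "y i \<le> c (Suc i) + y (Suc i)" using y i unfolding dfeas_def by blast
      thus "0 \<le> c (Suc i) - y i + y (Suc i)" by linarith
      show "0 \<le> w (Suc i)" using f2 i by auto
    qed
    moreover have "0 \<le> (C - y n) * w (n+1)" using y f2 n unfolding dfeas_def by auto
    moreover have "0 \<le> (\<Sum>i=1..n. (d i + y i) * v i)"
    proof (intro sum_nonneg mult_nonneg_nonneg)
      fix i assume i: "i \<in> {1..n}"
      have "- d i \<le> y i" using y i unfolding dfeas_def by blast
      thus "0 \<le> d i + y i" by linarith
      show "0 \<le> v i" using f4 i by auto
    qed
    ultimately show ?thesis by linarith
  qed
  thus ?thesis using slack_id[OF n f3 eq, of c d C y] by linarith
qed

definition wg :: "(nat \<Rightarrow> real) \<Rightarrow> (nat \<Rightarrow> real) \<Rightarrow> nat \<Rightarrow> real" where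
  "wg s u i = max 0 (gW s u (i - 1))"
definition vg :: "(nat \<Rightarrow> real) \<Rightarrow> (nat \<Rightarrow> real) \<Rightarrow> nat \<Rightarrow> real" where
  "vg s u i = max 0 (- gW s u i)"

lemma greedy_eq: "i \<ge> 1 \<Longrightarrow> u i - s i = wg s u (Suc i) - vg s u i - wg s u i"
  by (cases i) (auto simp: wg_def vg_def)

lemma greedy_feas:
  shows "\<forall>i\<in>{2..n+1}. wg s u i - vg s u (i-1) = u (i-1) + wg s u (i-1) - s (i-1)"
    and "\<forall>i\<in>{1..n+1}. wg s u i \<ge> 0" and "wg s u 1 = 0" and "\<forall>i\<in>{1..n}. vg s u i \<ge> 0"
proof -
  show "\<forall>i\<in>{2..n+1}. wg s u i - vg s u (i-1) = u (i-1) + wg s u (i-1) - s (i-1)"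
  proof
    fix i assume "i \<in> {2..n+1}"
    then obtain m where m: "i = Suc m" "m \<ge> 1" by (cases i) auto
    show "wg s u i - vg s u (i-1) = u (i-1) + wg s u (i-1) - s (i-1)"
      using greedy_eq[OF m(2), of u s] m by simp
  qed
qed (auto simp: wg_def vg_def)

lemma greedy_cost:
  assumes n: "n \<ge> 1"
  shows "(\<Sum>i=1..n. c i * wg s u i + d i * vg s u i) + C * wg s u (n+1)
       = (\<Sum>i=1..n. pic n c d C i (lg n s u i) * (u i - s i))"
proof -
  let ?y = "\<lambda>i. pic n c d C i (lg n s u i)"
  have eq: "\<forall>i\<in>{1..n}. u i - s i = wg s u (Suc i) - vg s u i - wg s u i"
    using greedy_eq by auto
  have z1: "(\<Sum>i=1..n-1. (c (Suc i) - ?y i + ?y (Suc i)) * wg s u (Suc i)) = 0"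
  proof (intro sum.neutral ballI)
    fix i assume i: "i \<in> {1..n-1}"
    show "(c (Suc i) - ?y i + ?y (Suc i)) * wg s u (Suc i) = 0"
    proof (cases "gW s u i > 0")
      case True
      have il: "i \<le> n" using i by auto
      have "lg n s u i = lg n s u (Suc i)" by (rule lg_pos[OF il True])
      moreover have "Suc i \<le> lg n s u (Suc i)" "lg n s u (Suc i) \<le> n+1"
        using lg_bounds[of "Suc i" n s u] i by auto
      ultimately have "?y i = c (Suc i) + ?y (Suc i)"
        using pic_step[of i n "lg n s u (Suc i)" c d C] i by simp
      thus ?thesis by simp
    next
      case False thus ?thesis by (simp add: wg_def)
    qed
  qed
  have z2: "(C - ?y n) * wg s u (n+1) = 0"
  proof (cases "gW s u n > 0")
    case True
    have "lg n s u n = lg n s u (Suc n)" by (rule lg_pos[OF _ True]) simp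
    moreover have "lg n s u (Suc n) = n+1" using lg_bounds[of "Suc n" n s u] by simp
    ultimately show ?thesis using pic_n1[of n c d C] by simp
  next
    case False thus ?thesis by (simp add: wg_def)
  qed
  have z3: "(\<Sum>i=1..n. (d i + ?y i) * vg s u i) = 0"
  proof (intro sum.neutral ballI)
    fix i assume i: "i \<in> {1..n}"
    show "(d i + ?y i) * vg s u i = 0"
    proof (cases "gW s u i < 0")
      case True
      have il: "i \<le> n" using i by auto
      have "lg n s u i = i" by (rule lg_le0[OF il]) (use True in simp)
      thus ?thesis using pic_ii[OF il, of c d C] by simp
    next
      case False thus ?thesis by (simp add: vg_def)
    qed
  qed
  show ?thesis using slack_id[OF n greedy_feas(3) eq, of c d C ?y] z1 z2 z3 by linarith
qed

lemma fval_props: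
  assumes c: "\<forall>i\<in>{1..n}. c i \<ge> 0" and d: "\<forall>i\<in>{1..n}. d i \<ge> 0" and C: "C \<ge> 0"
    and dc: "\<forall>i\<in>{1..n-1}. d (i+1) - d i \<le> c (i+1)" and n: "n \<ge> 1"
  shows "fval n c d C s u = (\<Sum>i=1..n. pic n c d C i (lg n s u i) * (u i - s i))"
    and "valid n \<sigma> \<Longrightarrow> (\<Sum>i=1..n. pic n c d C i (\<sigma> i) * (u i - s i)) \<le> fval n c d C s u"
proof -
  define S where "S = {(\<Sum>i=1..n. c i * w i + d i * v i) + C * w (n+1) | w v.
      (\<forall>i\<in>{2..n+1}. w i - v (i-1) = u (i-1) + w (i-1) - s (i-1)) \<and>
      (\<forall>i\<in>{1..n+1}. w i \<ge> 0) \<and> w 1 = 0 \<and> (\<forall>i\<in>{1..n}. v i \<ge> 0)}"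
  have fS: "fval n c d C s u = Inf S" unfolding S_def fval_def by simp
  have lb: "(\<Sum>i=1..n. y i * (u i - s i)) \<le> x" if "dfeas n c d C y" "x \<in> S" for y x
    using that weak_dual[OF n] unfolding S_def by blast
  have gS: "(\<Sum>i=1..n. pic n c d C i (lg n s u i) * (u i - s i)) \<in> S"
    unfolding S_def greedy_cost[OF n, symmetric] using greedy_feas by blast
  have dl: "dfeas n c d C (\<lambda>i. pic n c d C i (lg n s u i))"
    by (rule valid_dfeas[OF c d C dc n valid_lg])
  show eq: "fval n c d C s u = (\<Sum>i=1..n. pic n c d C i (lg n s u i) * (u i - s i))"
    unfolding fS by (rule cInf_eq_minimum[OF gS lb[OF dl]])
  assume v: "valid n \<sigma>"
  have "(\<Sum>i=1..n. pic n c d C i (\<sigma> i) * (u i - s i)) \<le> (\<Sum>i=1..n. pic n c d C i (lg n s u i) * (u i - s i))"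
    by (rule lb[OF valid_dfeas[OF c d C dc n v] gS])
  thus "(\<Sum>i=1..n. pic n c d C i (\<sigma> i) * (u i - s i)) \<le> fval n c d C s u" using eq by simp
qed


lemma embed_finite:
  fixes f :: "'a \<Rightarrow> real"
  assumes A: "finite A" and nn: "\<And>x. 0 \<le> f x" and z: "\<And>x. x \<notin> A \<Longrightarrow> f x = 0" and s: "sum f A = 1"
  shows "pmf (embed_pmf f) x = f x" "set_pmf (embed_pmf f) = {x. f x \<noteq> 0}"
proof -
  have "(\<integral>\<^sup>+x. ennreal (f x) \<partial>count_space UNIV) = (\<integral>\<^sup>+x. ennreal (f x) * indicator A x \<partial>count_space UNIV)"
    by (intro nn_integral_cong) (auto simp: z split: split_indicator)
  also have "\<dots> = (\<integral>\<^sup>+x. ennreal (f x) \<partial>count_space A)"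
    by (simp add: nn_integral_count_space_indicator)
  also have "\<dots> = (\<Sum>x\<in>A. ennreal (f x))" using A by (simp add: nn_integral_count_space_finite)
  also have "\<dots> = ennreal (sum f A)" using nn by (simp add: sum_ennreal)
  finally have p: "(\<integral>\<^sup>+x. ennreal (f x) \<partial>count_space UNIV) = 1" using s by simp
  show "pmf (embed_pmf f) x = f x" by (rule pmf_embed_pmf[OF nn p])
  show "set_pmf (embed_pmf f) = {x. f x \<noteq> 0}" by (rule set_embed_pmf[OF nn p])
qed

lemma prob_bind_pmf:
  "measure_pmf.prob (bind_pmf M N) X = measure_pmf.expectation M (\<lambda>x. measure_pmf.prob (N x) X)"
proof -
  have "emeasure (measure_pmf (bind_pmf M N)) X = (\<integral>\<^sup>+x. emeasure (N x) X \<partial>M)"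
    by (rule emeasure_bind_pmf)
  also have "\<dots> = (\<integral>\<^sup>+x. ennreal (measure_pmf.prob (N x) X) \<partial>M)"
    by (intro nn_integral_cong) (simp add: measure_pmf.emeasure_eq_measure)
  also have "\<dots> = ennreal (measure_pmf.expectation M (\<lambda>x. measure_pmf.prob (N x) X))"
    by (intro nn_integral_eq_integral measure_pmf.integrable_const_bound[where B=1]) auto
  finally show ?thesis
    by (simp add: measure_pmf.emeasure_eq_measure integral_nonneg_AE)
qed

locale flow =
  fixes n :: nat and pp :: "nat \<Rightarrow> nat \<Rightarrow> real"
  assumes n1: "n \<ge> 1"
    and F1: "\<forall>i\<in>{1..n}. (\<Sum>l=i..n+1. \<Sum>k=1..i. pp k l) = 1"
    and F2: "\<forall>k\<in>{1..n}. \<forall>l\<in>{k..n+1}. pp k l \<ge> 0"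
begin

definition a :: "nat \<Rightarrow> nat \<Rightarrow> real" where "a i l = (\<Sum>k=1..i. pp k l)"
definition AA :: "nat \<Rightarrow> real" where "AA i = (if i = 0 then 1 else a i i)"
definition wts :: "nat \<Rightarrow> nat \<Rightarrow> real" where
  "wts i l = (if Suc i \<le> l \<and> l \<le> n+1 then pp (Suc i) l / AA i else 0)"
definition nxt :: "nat \<Rightarrow> nat pmf" where
  "nxt i = (if i < n \<and> AA i > 0 then embed_pmf (wts i) else return_pmf (n+1))"
definition step :: "nat \<Rightarrow> (nat \<times> nat) set \<times> nat \<Rightarrow> ((nat \<times> nat) set \<times> nat) pmf" where
  "step i x = (if snd x = i then map_pmf (\<lambda>l. (insert (Suc i, l) (fst x), l)) (nxt i) else return_pmf x)"

primrec X :: "nat \<Rightarrow> ((nat \<times> nat) set \<times> nat) pmf" where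
  "X 0 = return_pmf ({}, 0)"
| "X (Suc i) = bind_pmf (X i) (step i)"

lemma a_nonneg: "i \<le> l \<Longrightarrow> l \<le> n+1 \<Longrightarrow> i \<le> n \<Longrightarrow> a i l \<ge> 0"
  unfolding a_def using F2 by (intro sum_nonneg) auto

lemma AA_nonneg: "i \<le> n \<Longrightarrow> AA i \<ge> 0"
  unfolding AA_def using a_nonneg by auto

lemma conserv: assumes "i < n" shows "(\<Sum>l=Suc i..n+1. pp (Suc i) l) = AA i"
proof (cases "i = 0")
  case True
  have "1 \<in> {1..n}" using n1 by auto
  from bspec[OF F1 this] have "(\<Sum>l=1..n+1. \<Sum>k=1..1. pp k l) = 1" .
  thus ?thesis using True by (simp add: AA_def)
next
  case False
  have i1: "Suc i \<in> {1..n}" "i \<in> {1..n}" using assms False by auto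
  have e1: "(\<Sum>l=Suc i..n+1. a (Suc i) l) = 1" using F1 i1 unfolding a_def by blast
  have e0: "(\<Sum>l=i..n+1. a i l) = 1" using F1 i1 unfolding a_def by blast
  have "(\<Sum>l=i..n+1. a i l) = a i i + (\<Sum>l=Suc i..n+1. a i l)"
    using assms by (simp add: sum.atLeast_Suc_atMost)
  moreover have "(\<Sum>l=Suc i..n+1. a (Suc i) l) = (\<Sum>l=Suc i..n+1. a i l) + (\<Sum>l=Suc i..n+1. pp (Suc i) l)"
    unfolding a_def by (simp add: sum.distrib)
  ultimately show ?thesis using e0 e1 False by (simp add: AA_def)
qed

lemma wts_sum: assumes "i < n" "AA i > 0" shows "sum (wts i) {Suc i..n+1} = 1"
proof -
  have "sum (wts i) {Suc i..n+1} = (\<Sum>l=Suc i..n+1. pp (Suc i) l / AA i)"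
    by (intro sum.cong) (auto simp: wts_def)
  also have "\<dots> = (\<Sum>l=Suc i..n+1. pp (Suc i) l) / AA i" by (rule sum_divide_distrib[symmetric])
  finally have "sum (wts i) {Suc i..n+1} = (\<Sum>l=Suc i..n+1. pp (Suc i) l) / AA i" .
  thus ?thesis using conserv[OF assms(1)] assms(2) by simp
qed

lemma nxt_pmf: assumes "i < n" "AA i > 0" shows "pmf (nxt i) l = wts i l"
  and "set_pmf (nxt i) = {l. wts i l \<noteq> 0}"
proof -
  have nn: "\<And>l. 0 \<le> wts i l" unfolding wts_def using F2 assms AA_nonneg[of i]
    by (auto intro!: divide_nonneg_pos)
  have z: "\<And>l. l \<notin> {Suc i..n+1} \<Longrightarrow> wts i l = 0" unfolding wts_def by auto
  show "pmf (nxt i) l = wts i l" "set_pmf (nxt i) = {l. wts i l \<noteq> 0}"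
    using embed_finite[of "{Suc i..n+1}" "wts i", OF _ nn z wts_sum[OF assms]] assms
    by (auto simp: nxt_def)
qed

lemma nxt_set: assumes "i \<le> n" shows "set_pmf (nxt i) \<subseteq> {Suc i..n+1}"
proof (cases "i < n \<and> AA i > 0")
  case True thus ?thesis using nxt_pmf(2)[of i] by (auto simp: wts_def split: if_splits)
next
  case False thus ?thesis using assms by (auto simp: nxt_def)
qed

lemma nxt_prob: assumes "i < n" "Suc i \<le> l" "l \<le> n+1" shows "AA i * pmf (nxt i) l = pp (Suc i) l"
proof (cases "AA i > 0")
  case True thus ?thesis using nxt_pmf(1)[OF assms(1) True, of l] assms by (simp add: wts_def)
next
  case False
  hence z: "AA i = 0" using AA_nonneg[of i] assms by auto
  have "\<forall>l'\<in>{Suc i..n+1}. pp (Suc i) l' \<ge> 0" using F2 assms by auto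
  moreover have "sum (pp (Suc i)) {Suc i..n+1} = 0" using conserv[OF assms(1)] z by simp
  ultimately have "\<forall>l'\<in>{Suc i..n+1}. pp (Suc i) l' = 0"
    using sum_nonneg_eq_0_iff[of "{Suc i..n+1}" "pp (Suc i)"] by auto
  thus ?thesis using z assms by auto
qed

definition inv :: "nat \<Rightarrow> (nat \<times> nat) set \<times> nat \<Rightarrow> bool" where
  "inv i x \<longleftrightarrow> i \<le> snd x \<and> snd x \<le> n+1 \<and>
     (\<forall>kl\<in>fst x. 1 \<le> fst kl \<and> fst kl \<le> snd kl \<and> snd kl \<le> snd x \<and> fst kl \<le> i) \<and>
     (\<forall>m\<in>{1..snd x}. card {kl\<in>fst x. fst kl \<le> m \<and> m \<le> snd kl} = 1) \<and> finite (fst x)"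

lemma X_inv: "i \<le> n+1 \<Longrightarrow> x \<in> set_pmf (X i) \<Longrightarrow> inv i x"
proof (induction i arbitrary: x)
  case 0 thus ?case by (auto simp: inv_def)
next
  case (Suc i)
  from Suc.prems obtain y where y: "y \<in> set_pmf (X i)" "x \<in> set_pmf (step i y)" by auto
  have iy: "inv i y" using Suc.IH[OF _ y(1)] Suc.prems by simp
  obtain S cur where yS: "y = (S, cur)" by (cases y)
  show ?case
  proof (cases "cur = i")
    case False
    hence "x = y" using y(2) yS by (simp add: step_def)
    thus ?thesis using iy False yS unfolding inv_def by force
  next
    case True
    then obtain l where l: "l \<in> set_pmf (nxt i)" "x = (insert (Suc i, l) S, l)"
      using y(2) yS by (auto simp: step_def)
    have lb: "Suc i \<le> l" "l \<le> n+1" using nxt_set[of i] l Suc.prems by auto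
    have old: "\<forall>kl\<in>S. 1 \<le> fst kl \<and> fst kl \<le> snd kl \<and> snd kl \<le> i \<and> fst kl \<le> i"
      using iy yS True unfolding inv_def by auto
    have card_old: "\<forall>m\<in>{1..i}. card {kl\<in>S. fst kl \<le> m \<and> m \<le> snd kl} = 1"
      using iy yS True unfolding inv_def by auto
    have cardx: "card {kl\<in>insert (Suc i, l) S. fst kl \<le> m \<and> m \<le> snd kl} = 1" if m: "m \<in> {1..l}" for m
    proof (cases "m \<le> i")
      case True
      hence "{kl\<in>insert (Suc i, l) S. fst kl \<le> m \<and> m \<le> snd kl} = {kl\<in>S. fst kl \<le> m \<and> m \<le> snd kl}"
        by auto
      thus ?thesis using card_old True m by auto
    next
      case False
      hence "{kl\<in>insert (Suc i, l) S. fst kl \<le> m \<and> m \<le> snd kl} = {(Suc i, l)}"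
        using old m by force
      thus ?thesis by simp
    qed
    show ?thesis unfolding inv_def l(2) using lb old cardx iy yS by (auto simp: inv_def)
  qed
qed

lemma X_finite: "finite (set_pmf (X i))"
proof (induction i)
  case 0 thus ?case by simp
next
  case (Suc i)
  have "finite (set_pmf (step i x))" for x
  proof -
    have "finite (set_pmf (nxt i))"
    proof (cases "i < n \<and> AA i > 0")
      case True
      hence "set_pmf (nxt i) \<subseteq> {Suc i..n+1}" using nxt_pmf(2)[of i] by (auto simp: wts_def split: if_splits)
      thus ?thesis using finite_subset by blast
    qed (auto simp: nxt_def)
    thus ?thesis by (simp add: step_def)
  qed
  thus ?case using Suc by simp
qed

end


context flow begin

lemma integrable_X: "integrable (measure_pmf (X i)) (f :: _ \<Rightarrow> real)"
  by (rule integrable_measure_pmf_finite[OF X_finite])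

lemma exp_ind: "measure_pmf.expectation M (\<lambda>x. if P x then 1 else 0) = measure_pmf.prob M {x. P x}"
proof -
  have "(\<lambda>x. if P x then 1 else (0::real)) = indicator {x. P x}" by (auto simp: indicator_def)
  thus ?thesis by (simp add: measure_pmf.emeasure_eq_measure)
qed

lemma prob_step_cur:
  assumes "Suc i \<le> l"
  shows "measure_pmf.prob (step i x) {y. snd y = l} =
         (if snd x = i then pmf (nxt i) l else (if snd x = l then 1 else 0))"
proof (cases "snd x = i")
  case True
  have "measure_pmf.prob (step i x) {y. snd y = l} = measure_pmf.prob (nxt i) {l}"
    using True by (simp add: step_def vimage_def)
  thus ?thesis using True by (simp add: measure_pmf_single)
qed (simp add: step_def indicator_def)

lemma cur_marg: "i \<le> n \<Longrightarrow> l \<in> {i..n+1} \<Longrightarrow>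
   measure_pmf.prob (X i) {x. snd x = l} = (if l = i then AA i else a i l)"
proof (induction i arbitrary: l)
  case 0
  thus ?case by (auto simp: AA_def a_def indicator_def)
next
  case (Suc i)
  have il: "i < n" "Suc i \<le> l" "l \<le> n+1" using Suc.prems by auto
  have "measure_pmf.prob (X (Suc i)) {x. snd x = l} =
     measure_pmf.expectation (X i) (\<lambda>x. pmf (nxt i) l * (if snd x = i then 1 else 0) + (if snd x = l then 1 else 0))"
  proof -
    have "(\<lambda>x. measure_pmf.prob (step i x) {y. snd y = l}) =
      (\<lambda>x. pmf (nxt i) l * (if snd x = i then 1 else 0) + (if snd x = l then 1 else 0))"
      using il by (auto simp: fun_eq_iff prob_step_cur)
    thus ?thesis by (simp add: prob_bind_pmf)
  qed
  also have "\<dots> = pmf (nxt i) l * measure_pmf.prob (X i) {x. snd x = i} + measure_pmf.prob (X i) {x. snd x = l}"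
    by (simp add: integrable_X exp_ind)
  also have "\<dots> = pmf (nxt i) l * AA i + a i l"
    using Suc.IH[of i] Suc.IH[of l] il by simp
  also have "\<dots> = pp (Suc i) l + a i l" using nxt_prob[OF il] by (simp add: mult.commute)
  also have "\<dots> = a (Suc i) l" by (simp add: a_def)
  finally show ?case using il by (auto simp: AA_def)
qed

lemma pair_new:
  assumes il: "i < n" "Suc i \<le> l" "l \<le> n+1"
  shows "measure_pmf.prob (X (Suc i)) {x. (Suc i, l) \<in> fst x} = pp (Suc i) l"
proof -
  have "measure_pmf.prob (X (Suc i)) {x. (Suc i, l) \<in> fst x} =
     measure_pmf.expectation (X i) (\<lambda>x. measure_pmf.prob (step i x) {y. (Suc i, l) \<in> fst y})"
    by (simp add: prob_bind_pmf)
  also have "\<dots> = measure_pmf.expectation (X i) (\<lambda>x. pmf (nxt i) l * (if snd x = i then 1 else 0))"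
  proof (intro integral_cong_AE)
    show "AE x in measure_pmf (X i). measure_pmf.prob (step i x) {y. (Suc i, l) \<in> fst y} =
        pmf (nxt i) l * (if snd x = i then 1 else 0)"
    proof (unfold AE_measure_pmf_iff, intro ballI)
      fix x assume x: "x \<in> set_pmf (X i)"
      have iv: "inv i x" using X_inv[OF _ x] il by simp
      hence nS: "(Suc i, l) \<notin> fst x" unfolding inv_def by auto
      show "measure_pmf.prob (step i x) {y. (Suc i, l) \<in> fst y} = pmf (nxt i) l * (if snd x = i then 1 else 0)"
      proof (cases "snd x = i")
        case True
        have "measure_pmf.prob (step i x) {y. (Suc i, l) \<in> fst y} = measure_pmf.prob (nxt i) {l}"
          using True nS by (simp add: step_def vimage_def)
        thus ?thesis using True by (simp add: measure_pmf_single)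
      qed (use nS in \<open>simp add: step_def indicator_def\<close>)
    qed
  qed auto
  also have "\<dots> = pmf (nxt i) l * measure_pmf.prob (X i) {x. snd x = i}"
    by (simp add: exp_ind)
  also have "\<dots> = pmf (nxt i) l * AA i" using cur_marg[of i i] il by simp
  also have "\<dots> = pp (Suc i) l" using nxt_prob[OF il] by (simp add: mult.commute)
  finally show ?thesis .
qed

lemma pair_persist:
  assumes "k \<le> i"
  shows "measure_pmf.prob (X (Suc i)) {x. (k, l) \<in> fst x} = measure_pmf.prob (X i) {x. (k, l) \<in> fst x}"
proof -
  have "\<And>x. measure_pmf.prob (step i x) {y. (k, l) \<in> fst y} = (if (k,l) \<in> fst x then 1 else 0)"
    using assms by (auto simp: step_def vimage_def indicator_def)
  thus ?thesis by (simp add: prob_bind_pmf exp_ind)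
qed

lemma pair_final:
  assumes "k \<in> {1..n}" "l \<in> {k..n+1}"
  shows "measure_pmf.prob (X (n+1)) {x. (k, l) \<in> fst x} = pp k l"
proof -
  have "\<forall>m. k + m \<le> n+1 \<longrightarrow> measure_pmf.prob (X (k + m)) {x. (k, l) \<in> fst x} = pp k l"
  proof
    fix m show "k + m \<le> n+1 \<longrightarrow> measure_pmf.prob (X (k + m)) {x. (k, l) \<in> fst x} = pp k l"
    proof (induction m)
      case 0
      obtain i where i: "k = Suc i" using assms by (cases k) auto
      show ?case using pair_new[of i l] assms i by auto
    next
      case (Suc m)
      thus ?case using pair_persist[of k "k + m" l] by auto
    qed
  qed
  from this[rule_format, of "n + 1 - k"] show ?thesis using assms by auto
qed

definition PT :: "(nat \<times> nat \<Rightarrow> nat) pmf" where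
  "PT = map_pmf (\<lambda>x. (\<lambda>kl\<in>Pairs n. if kl \<in> fst x then 1 else 0)) (X (n+1))"

lemma PT_marg: "k \<in> {1..n} \<Longrightarrow> l \<in> {k..n+1} \<Longrightarrow> measure_pmf.prob PT {t. t (k, l) = 1} = pp k l"
proof -
  assume a: "k \<in> {1..n}" "l \<in> {k..n+1}"
  hence "(k, l) \<in> Pairs n" by (auto simp: Pairs_def)
  hence e: "(\<lambda>x. (\<lambda>kl\<in>Pairs n. if kl \<in> fst x then 1 else (0::nat))) -` {t. t (k, l) = 1} = {x. (k, l) \<in> fst x}"
    by auto
  have "measure_pmf.prob PT {t. t (k, l) = 1} = measure_pmf.prob (X (n+1))
     ((\<lambda>x. (\<lambda>kl\<in>Pairs n. if kl \<in> fst x then 1 else (0::nat))) -` {t. t (k, l) = 1})"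
    unfolding PT_def by (rule measure_map_pmf)
  thus ?thesis unfolding e using pair_final[OF a] by simp
qed

lemma PT_set: "set_pmf PT \<subseteq> Tset n"
proof
  fix t assume "t \<in> set_pmf PT"
  then obtain x where x: "x \<in> set_pmf (X (n+1))" and t: "t = (\<lambda>kl\<in>Pairs n. if kl \<in> fst x then 1 else 0)"
    unfolding PT_def by auto
  have iv: "inv (n+1) x" by (rule X_inv[OF _ x]) simp
  hence cur: "snd x = n+1" unfolding inv_def by auto
  have SP: "fst x \<subseteq> Pairs n" using iv cur unfolding inv_def Pairs_def by auto
  have fin: "finite (fst x)" using iv unfolding inv_def by auto
  show "t \<in> Tset n" unfolding Tset_def
  proof (intro CollectI conjI ballI)
    show "t \<in> Pi\<^sub>E (Pairs n) (\<lambda>_. {0, 1})" unfolding t by auto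
  next
    fix m assume m: "m \<in> {1..n+1}"
    have "(\<Sum>k=1..m. \<Sum>l=m..n+1. t (k, l)) = (\<Sum>(k,l)\<in>{1..m} \<times> {m..n+1}. t (k, l))"
      by (rule sum.cartesian_product)
    also have "\<dots> = (\<Sum>kl\<in>{1..m} \<times> {m..n+1}. t kl)" by simp
    also have "\<dots> = (\<Sum>kl\<in>{1..m} \<times> {m..n+1}. of_bool (kl \<in> fst x))"
      using m by (intro sum.cong) (auto simp: t Pairs_def)
    also have "\<dots> = card (({1..m} \<times> {m..n+1}) \<inter> {kl. kl \<in> fst x})" by simp
    also have "({1..m} \<times> {m..n+1}) \<inter> {kl. kl \<in> fst x} = {kl\<in>fst x. fst kl \<le> m \<and> m \<le> snd kl}"
      using SP by (auto simp: Pairs_def)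
    also have "card \<dots> = 1" using iv cur m unfolding inv_def by auto
    finally show "(\<Sum>k=1..m. \<Sum>l=m..n+1. t (k, l)) = 1" .
  qed
qed

end

lemma flow_decomp:
  fixes p :: "nat \<Rightarrow> nat \<Rightarrow> nat \<Rightarrow> real"
  assumes n: "n \<ge> 1"
    and F1: "\<forall>i\<in>{1..n}. (\<Sum>l=i..n+1. Psum p i l j) = 1"
    and F2: "\<forall>k\<in>{1..n}. \<forall>l\<in>{k..n+1}. p k l j \<ge> 0"
  shows "\<exists>P. has_marginals n p j P"
proof -
  interpret flow n "\<lambda>k l. p k l j"
    using n F1 F2 by unfold_locales (auto simp: Psum_def)
  show ?thesis unfolding has_marginals_def using PT_set PT_marg by blast
qed


lemma gW_meas: "m \<le> n \<Longrightarrow> (\<lambda>u. gW s u m) \<in> borel_measurable (Mn n)"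
proof (induction m)
  case 0 thus ?case by simp
next
  case (Suc m)
  have h: "(\<lambda>u. gW s u m) \<in> borel_measurable (Mn n)" using Suc by simp
  have c: "(\<lambda>u. u (Suc m)) \<in> borel_measurable (Mn n)"
    unfolding Mn_def by (rule measurable_component_singleton) (use Suc.prems in auto)
  show ?case using h c by simp
qed

lemma lg_meas: "(\<lambda>u. lg n s u i) \<in> measurable (Mn n) (count_space UNIV)"
  unfolding lg_def
proof (rule measurable_Least)
  fix l
  have [measurable]: "(\<lambda>u. gW s u (min l n)) \<in> borel_measurable (Mn n)" by (rule gW_meas) simp
  show "(\<lambda>u. i \<le> l \<and> (n+1 \<le> l \<or> gW s u (min l n) \<le> 0)) \<in> measurable (Mn n) (count_space UNIV)"
    by measurable
qed

lemma fval_meas: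
  assumes c: "\<forall>i\<in>{1..n}. c i \<ge> 0" and d: "\<forall>i\<in>{1..n}. d i \<ge> 0" and C: "C \<ge> 0"
    and dc: "\<forall>i\<in>{1..n-1}. d (i+1) - d i \<le> c (i+1)" and n: "n \<ge> 1"
  shows "(\<lambda>u. fval n c d C s u) \<in> borel_measurable (Mn n)"
proof -
  have e: "(\<lambda>u. fval n c d C s u) = (\<lambda>u. \<Sum>i=1..n. pic n c d C i (lg n s u i) * (u i - s i))"
    using fval_props(1)[OF c d C dc n] by auto
  have "(\<lambda>u. \<Sum>i=1..n. pic n c d C i (lg n s u i) * (u i - s i)) \<in> borel_measurable (Mn n)"
  proof (intro borel_measurable_sum borel_measurable_times borel_measurable_diff)
    fix i assume i: "i \<in> {1..n}"
    show "(\<lambda>u. u i) \<in> borel_measurable (Mn n)"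
      unfolding Mn_def by (rule measurable_component_singleton) (use i in auto)
    show "(\<lambda>u. pic n c d C i (lg n s u i)) \<in> borel_measurable (Mn n)"
      by (rule measurable_compose[OF lg_meas]) simp
  qed simp
  thus ?thesis using e by simp
qed


definition bx :: "nat \<Rightarrow> nat \<Rightarrow> (nat \<times> nat) set" where "bx n i = {1..i} \<times> {i..n+1}"
definition sig :: "nat \<Rightarrow> (nat \<times> nat \<Rightarrow> nat) \<Rightarrow> nat \<Rightarrow> nat" where
  "sig n \<tau> i = snd (THE kl. kl \<in> bx n i \<and> \<tau> kl = 1)"
definition coef :: "(nat \<times> nat \<Rightarrow> nat) \<Rightarrow> nat \<Rightarrow> nat \<Rightarrow> real" where
  "coef \<tau> i l = (\<Sum>k=1..i. real (\<tau> (k, l)))"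

lemma tset_01: "\<tau> \<in> Tset n \<Longrightarrow> 1 \<le> k \<Longrightarrow> k \<le> l \<Longrightarrow> l \<le> n+1 \<Longrightarrow> \<tau> (k,l) = 0 \<or> \<tau> (k,l) = 1"
  unfolding Tset_def Pairs_def by (auto simp: PiE_iff)

lemma tset_box:
  assumes t: "\<tau> \<in> Tset n" and i: "i \<in> {1..n+1}"
  shows "\<exists>kl. {kl'\<in>bx n i. \<tau> kl' = 1} = {kl}"
proof -
  have s: "(\<Sum>k=1..i. \<Sum>l=i..n+1. \<tau> (k, l)) = 1" using t i unfolding Tset_def by auto
  have "(\<Sum>k=1..i. \<Sum>l=i..n+1. \<tau> (k, l)) = (\<Sum>(k,l)\<in>bx n i. \<tau> (k, l))"
    unfolding bx_def by (rule sum.cartesian_product)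
  also have "\<dots> = (\<Sum>kl\<in>bx n i. of_bool (\<tau> kl = 1))"
  proof (intro sum.cong refl)
    fix kl assume "kl \<in> bx n i"
    hence "\<tau> kl = 0 \<or> \<tau> kl = 1" using tset_01[OF t, of "fst kl" "snd kl"] unfolding bx_def
      by (cases kl) auto
    thus "(case kl of (k, l) \<Rightarrow> \<tau> (k, l)) = of_bool (\<tau> kl = 1)" by (cases kl) auto
  qed
  also have "\<dots> = card (bx n i \<inter> {kl. \<tau> kl = 1})" by (simp add: bx_def)
  finally have "card {kl'\<in>bx n i. \<tau> kl' = 1} = 1" using s by (simp add: Int_def conj_commute)
  thus ?thesis by (simp add: card_1_singleton_iff)
qed

lemma sig_props:
  assumes t: "\<tau> \<in> Tset n" and i: "i \<in> {1..n+1}"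
  shows "sig n \<tau> i \<in> {i..n+1}" "\<exists>k\<in>{1..i}. \<tau> (k, sig n \<tau> i) = 1"
    "\<And>k l. k \<in> {1..i} \<Longrightarrow> l \<in> {i..n+1} \<Longrightarrow> \<tau> (k, l) = 1 \<Longrightarrow> l = sig n \<tau> i"
    "\<And>l. l \<in> {i..n+1} \<Longrightarrow> coef \<tau> i l = (if l = sig n \<tau> i then 1 else 0)"
proof -
  obtain kl0 where kl0': "{kl'\<in>bx n i. \<tau> kl' = 1} = {kl0}" using tset_box[OF t i] by blast
  obtain k0 l0 where kk: "kl0 = (k0, l0)" by (cases kl0)
  have kl0: "{kl'\<in>bx n i. \<tau> kl' = 1} = {(k0, l0)}" using kl0' kk by simp
  have "(k0, l0) \<in> {kl'\<in>bx n i. \<tau> kl' = 1}" unfolding kl0 by simp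
  hence k0: "(k0, l0) \<in> bx n i" "\<tau> (k0, l0) = 1" by simp_all
  have kr: "k0 \<in> {1..i}" "l0 \<in> {i..n+1}" using k0(1) unfolding bx_def by simp_all
  have uniq: "\<And>kl. kl \<in> bx n i \<Longrightarrow> \<tau> kl = 1 \<Longrightarrow> kl = (k0, l0)"
  proof -
    fix kl assume "kl \<in> bx n i" "\<tau> kl = 1"
    hence "kl \<in> {kl'\<in>bx n i. \<tau> kl' = 1}" by simp
    thus "kl = (k0, l0)" unfolding kl0 by simp
  qed
  have th: "(THE kl. kl \<in> bx n i \<and> \<tau> kl = 1) = (k0, l0)"
  proof (rule the_equality)
    show "(k0, l0) \<in> bx n i \<and> \<tau> (k0, l0) = 1" using k0 by simp
    show "\<And>kl. kl \<in> bx n i \<and> \<tau> kl = 1 \<Longrightarrow> kl = (k0, l0)" using uniq by blast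
  qed
  hence sg: "sig n \<tau> i = l0" by (simp add: sig_def)
  show "sig n \<tau> i \<in> {i..n+1}" using kr sg by simp
  show "\<exists>k\<in>{1..i}. \<tau> (k, sig n \<tau> i) = 1" using kr k0 sg by blast
  show "\<And>k l. k \<in> {1..i} \<Longrightarrow> l \<in> {i..n+1} \<Longrightarrow> \<tau> (k, l) = 1 \<Longrightarrow> l = sig n \<tau> i"
  proof -
    fix k l assume a: "k \<in> {1..i}" "l \<in> {i..n+1}" "\<tau> (k, l) = 1"
    have "(k, l) \<in> bx n i" using a unfolding bx_def by simp
    hence "(k, l) = (k0, l0)" using uniq a(3) by blast
    thus "l = sig n \<tau> i" using sg by simp
  qed
  fix l assume l: "l \<in> {i..n+1}"
  have "coef \<tau> i l = (\<Sum>k=1..i. of_bool (\<tau> (k, l) = 1))"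
    unfolding coef_def
  proof (intro sum.cong refl)
    fix k assume "k \<in> {1..i}"
    hence "\<tau> (k, l) = 0 \<or> \<tau> (k, l) = 1" using tset_01[OF t, of k l] l by auto
    thus "real (\<tau> (k, l)) = of_bool (\<tau> (k, l) = 1)" by auto
  qed
  also have "\<dots> = real (card ({1..i} \<inter> {k. \<tau> (k, l) = 1}))" by simp
  also have "{1..i} \<inter> {k. \<tau> (k, l) = 1} = (if l = l0 then {k0} else {})"
  proof
    show "{1..i} \<inter> {k. \<tau> (k, l) = 1} \<subseteq> (if l = l0 then {k0} else {})"
    proof
      fix k assume "k \<in> {1..i} \<inter> {k. \<tau> (k, l) = 1}"
      hence "(k, l) \<in> bx n i" "\<tau> (k, l) = 1" using l unfolding bx_def by auto
      hence "(k, l) = (k0, l0)" using uniq by blast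
      thus "k \<in> (if l = l0 then {k0} else {})" by simp
    qed
    show "(if l = l0 then {k0} else {}) \<subseteq> {1..i} \<inter> {k. \<tau> (k, l) = 1}"
      using kr k0 by auto
  qed
  finally show "coef \<tau> i l = (if l = sig n \<tau> i then 1 else 0)" using sg by simp
qed

lemma sig_valid: assumes t: "\<tau> \<in> Tset n" shows "valid n (sig n \<tau>)"
proof -
  have A: "\<forall>i\<in>{1..n}. i \<le> sig n \<tau> i \<and> sig n \<tau> i \<le> n+1"
    using sig_props(1)[OF t] by auto
  have B: "\<forall>i\<in>{1..n-1}. sig n \<tau> i = i \<or> sig n \<tau> i = sig n \<tau> (Suc i)"
  proof
    fix i assume i: "i \<in> {1..n-1}"
    have i': "i \<in> {1..n+1}" "Suc i \<in> {1..n+1}" using i by auto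
    show "sig n \<tau> i = i \<or> sig n \<tau> i = sig n \<tau> (Suc i)"
    proof (cases "sig n \<tau> i = i")
      case False
      have r: "sig n \<tau> i \<in> {i..n+1}" using sig_props(1)[OF t i'(1)] .
      obtain k where k: "k \<in> {1..i}" "\<tau> (k, sig n \<tau> i) = 1" using sig_props(2)[OF t i'(1)] by blast
      have "sig n \<tau> i = sig n \<tau> (Suc i)"
        by (rule sig_props(3)[OF t i'(2), of k]) (use k r False in auto)
      thus ?thesis by simp
    qed simp
  qed
  show ?thesis using A B unfolding valid_def by blast
qed

lemma onehot_sum:
  assumes t: "\<tau> \<in> Tset n" and i: "i \<in> {1..n+1}"
  shows "(\<Sum>l=i..n+1. coef \<tau> i l * F l) = F (sig n \<tau> i)"
proof -
  have "(\<Sum>l=i..n+1. coef \<tau> i l * F l) = (\<Sum>l=i..n+1. if l = sig n \<tau> i then F l else 0)"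
    using sig_props(4)[OF t i] by (intro sum.cong) auto
  also have "\<dots> = F (sig n \<tau> i)" using sig_props(1)[OF t i] by simp
  finally show ?thesis .
qed

lemma uvec_sig:
  assumes t: "\<tau> \<in> Tset n" and i: "i \<in> {1..n}"
  shows "uvec n uL uU uh p q r j \<tau> i = ustar uL uU uh p q r i (sig n \<tau> i) j"
proof -
  have "uvec n uL uU uh p q r j \<tau> i = (\<Sum>l=i..n+1. coef \<tau> i l * ustar uL uU uh p q r i l j)"
    using i unfolding uvec_def coef_def by simp
  also have "\<dots> = ustar uL uU uh p q r i (sig n \<tau> i) j"
    by (rule onehot_sum[OF t]) (use i in auto)
  finally show ?thesis .
qed

lemma Tset_finite: "finite (Tset n)"
proof -
  have "finite (Pairs n)" unfolding Pairs_def
    by (rule finite_subset[of _ "{1..n+1} \<times> {1..n+1}"]) auto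
  hence "finite (PiE (Pairs n) (\<lambda>_. {0::nat, 1}))" by (intro finite_PiE) auto
  moreover have "Tset n \<subseteq> PiE (Pairs n) (\<lambda>_. {0::nat, 1})" unfolding Tset_def by blast
  ultimately show ?thesis by (rule finite_subset[rotated])
qed


lemma dpi_prob: assumes "set_pmf P \<subseteq> space N" shows "prob_space (distr (measure_pmf P) N (\<lambda>x. x))"
proof -
  obtain g where g: "g \<in> measurable (measure_pmf P) N" "\<forall>x\<in>set_pmf P. g x = x"
    "distr (measure_pmf P) N (\<lambda>x. x) = distr (measure_pmf P) N g" using distr_pmf_fix[OF assms] by blast
  show ?thesis unfolding g(3) by (rule measure_pmf.prob_space_distr[OF g(1)])
qed

lemma dpi_emeasure: assumes "set_pmf P \<subseteq> space N" "A \<in> sets N"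
  shows "emeasure (distr (measure_pmf P) N (\<lambda>x. x)) A = emeasure (measure_pmf P) A"
proof -
  obtain g where g: "g \<in> measurable (measure_pmf P) N" "\<forall>x\<in>set_pmf P. g x = x"
    "distr (measure_pmf P) N (\<lambda>x. x) = distr (measure_pmf P) N g" using distr_pmf_fix[OF assms(1)] by blast
  have "emeasure (distr (measure_pmf P) N g) A = emeasure (measure_pmf P) (g -` A \<inter> space (measure_pmf P))"
    by (rule emeasure_distr[OF g(1) assms(2)])
  also have "\<dots> = emeasure (measure_pmf P) A"
    by (intro emeasure_eq_AE) (auto simp: AE_measure_pmf_iff g(2))
  finally show ?thesis using g(3) by simp
qed

lemma dpi_integral: assumes "set_pmf P \<subseteq> space N" "f \<in> borel_measurable N"
  shows "integral\<^sup>L (distr (measure_pmf P) N (\<lambda>x. x)) f = measure_pmf.expectation P (f :: _ \<Rightarrow> real)"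
proof -
  obtain g where g: "g \<in> measurable (measure_pmf P) N" "\<forall>x\<in>set_pmf P. g x = x"
    "distr (measure_pmf P) N (\<lambda>x. x) = distr (measure_pmf P) N g" using distr_pmf_fix[OF assms(1)] by blast
  have "integral\<^sup>L (distr (measure_pmf P) N g) f = measure_pmf.expectation P (\<lambda>x. f (g x))"
    by (rule integral_distr[OF g(1) assms(2)])
  also have "\<dots> = measure_pmf.expectation P f"
    by (intro integral_cong_AE) (auto simp: AE_measure_pmf_iff g(2))
  finally show ?thesis using g(3) by simp
qed

lemma dpi_nn_integral: assumes "set_pmf P \<subseteq> space N" "f \<in> borel_measurable N"
  shows "nn_integral (distr (measure_pmf P) N (\<lambda>x. x)) f = nn_integral (measure_pmf P) f"
proof -
  obtain g where g: "g \<in> measurable (measure_pmf P) N" "\<forall>x\<in>set_pmf P. g x = x"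
    "distr (measure_pmf P) N (\<lambda>x. x) = distr (measure_pmf P) N g" using distr_pmf_fix[OF assms(1)] by blast
  have "nn_integral (distr (measure_pmf P) N g) f = (\<integral>\<^sup>+x. f (g x) \<partial>measure_pmf P)"
    by (rule nn_integral_distr[OF g(1)]) (use assms(2) in simp)
  also have "\<dots> = nn_integral (measure_pmf P) f"
    by (intro nn_integral_cong_AE) (auto simp: AE_measure_pmf_iff g(2))
  finally show ?thesis using g(3) by simp
qed

lemma dpi_map: assumes P: "set_pmf P \<subseteq> space N" and h: "h \<in> measurable N N'"
    and P': "set_pmf (map_pmf h P) \<subseteq> space N'"
  shows "distr (distr (measure_pmf P) N (\<lambda>x. x)) N' h = distr (measure_pmf (map_pmf h P)) N' (\<lambda>x. x)"
proof (rule measure_eqI)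
  show "sets (distr (distr (measure_pmf P) N (\<lambda>x. x)) N' h) = sets (distr (measure_pmf (map_pmf h P)) N' (\<lambda>x. x))"
    by (simp only: sets_distr)
  fix A assume "A \<in> sets (distr (distr (measure_pmf P) N (\<lambda>x. x)) N' h)"
  hence A: "A \<in> sets N'" by (simp only: sets_distr)
  have h': "h \<in> measurable (distr (measure_pmf P) N (\<lambda>x. x)) N'"
    using h by (simp only: measurable_cong_sets[OF sets_distr refl])
  have hA: "h -` A \<inter> space N \<in> sets N" by (rule measurable_sets[OF h A])
  have "emeasure (distr (distr (measure_pmf P) N (\<lambda>x. x)) N' h) A =
        emeasure (distr (measure_pmf P) N (\<lambda>x. x)) (h -` A \<inter> space (distr (measure_pmf P) N (\<lambda>x. x)))"
    by (rule emeasure_distr[OF h' A])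
  also have "\<dots> = emeasure (distr (measure_pmf P) N (\<lambda>x. x)) (h -` A \<inter> space N)"
    by (simp only: space_distr)
  also have "\<dots> = emeasure (measure_pmf P) (h -` A \<inter> space N)"
    by (rule dpi_emeasure[OF P hA])
  also have "\<dots> = emeasure (measure_pmf P) (h -` A)"
  proof (rule emeasure_eq_AE)
    show "AE x in measure_pmf P. (x \<in> h -` A \<inter> space N) = (x \<in> h -` A)"
      unfolding AE_measure_pmf_iff using P by blast
  qed simp_all
  also have "\<dots> = emeasure (measure_pmf (map_pmf h P)) A" by (rule emeasure_map_pmf[symmetric])
  also have "\<dots> = emeasure (distr (measure_pmf (map_pmf h P)) N' (\<lambda>x. x)) A"
    by (rule dpi_emeasure[OF P' A, symmetric])
  finally show "emeasure (distr (distr (measure_pmf P) N (\<lambda>x. x)) N' h) A =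
    emeasure (distr (measure_pmf (map_pmf h P)) N' (\<lambda>x. x)) A" .
qed


lemma hm_finite: "has_marginals n p j P \<Longrightarrow> finite (set_pmf P)"
  unfolding has_marginals_def using Tset_finite finite_subset by blast

lemma exp_coef:
  assumes P: "has_marginals n p j P" and i: "i \<in> {1..n}" and l: "l \<in> {i..n+1}"
  shows "measure_pmf.expectation P (\<lambda>\<tau>. coef \<tau> i l) = Psum p i l j"
proof -
  have int: "\<And>f. integrable (measure_pmf P) (f :: _ \<Rightarrow> real)"
    by (rule integrable_measure_pmf_finite[OF hm_finite[OF P]])
  have "measure_pmf.expectation P (\<lambda>\<tau>. coef \<tau> i l) = (\<Sum>k=1..i. measure_pmf.expectation P (\<lambda>\<tau>. real (\<tau> (k, l))))"
    unfolding coef_def by (rule Bochner_Integration.integral_sum) (rule int)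
  also have "\<dots> = (\<Sum>k=1..i. p k l j)"
  proof (intro sum.cong refl)
    fix k assume k: "k \<in> {1..i}"
    have "measure_pmf.expectation P (\<lambda>\<tau>. real (\<tau> (k, l))) = measure_pmf.expectation P (indicator {\<tau>. \<tau> (k, l) = 1})"
    proof (intro integral_cong_AE)
      show "AE x in measure_pmf P. real (x (k, l)) = indicator {\<tau>. \<tau> (k, l) = 1} x"
        unfolding AE_measure_pmf_iff
      proof
        fix \<tau> assume "\<tau> \<in> set_pmf P"
        hence "\<tau> \<in> Tset n" using P unfolding has_marginals_def by blast
        hence "\<tau> (k, l) = 0 \<or> \<tau> (k, l) = 1" using tset_01[of \<tau> n k l] k l i by auto
        thus "real (\<tau> (k, l)) = indicator {\<tau>. \<tau> (k, l) = 1} \<tau>" by (auto simp: indicator_def)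
      qed
    qed simp_all
    also have "\<dots> = measure_pmf.prob P {\<tau>. \<tau> (k, l) = 1}" by simp
    also have "\<dots> = p k l j" using P k l i unfolding has_marginals_def by auto
    finally show "measure_pmf.expectation P (\<lambda>\<tau>. real (\<tau> (k, l))) = p k l j" .
  qed
  finally show ?thesis by (simp add: Psum_def)
qed

lemma exp_coef_sum:
  assumes P: "has_marginals n p j P"
  shows "measure_pmf.expectation P (\<lambda>\<tau>. \<Sum>i=1..n. \<Sum>l=i..n+1. coef \<tau> i l * G i l)
       = (\<Sum>i=1..n. \<Sum>l=i..n+1. Psum p i l j * G i l)"
proof -
  have int: "\<And>f. integrable (measure_pmf P) (f :: _ \<Rightarrow> real)"
    by (rule integrable_measure_pmf_finite[OF hm_finite[OF P]])
  have "measure_pmf.expectation P (\<lambda>\<tau>. \<Sum>i=1..n. \<Sum>l=i..n+1. coef \<tau> i l * G i l)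
      = (\<Sum>i=1..n. \<Sum>l=i..n+1. measure_pmf.expectation P (\<lambda>\<tau>. coef \<tau> i l) * G i l)"
    by (simp add: int Bochner_Integration.integral_sum)
  also have "\<dots> = (\<Sum>i=1..n. \<Sum>l=i..n+1. Psum p i l j * G i l)"
    using exp_coef[OF P] by (intro sum.cong refl) auto
  finally show ?thesis .
qed

lemma exp_bind_set:
  assumes N: "N \<ge> 1" and fin: "\<forall>j\<in>{1..N}. finite (set_pmf (Pt j))"
  shows "measure_pmf.expectation (bind_pmf (pmf_of_set {1..N}) (\<lambda>j. map_pmf (h j) (Pt j))) (F :: _ \<Rightarrow> real)
       = (\<Sum>j=1..N. measure_pmf.expectation (Pt j) (\<lambda>\<tau>. F (h j \<tau>))) / real N"
proof -
  have "measure_pmf.expectation (bind_pmf (pmf_of_set {1..N}) (\<lambda>j. map_pmf (h j) (Pt j))) F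
      = (\<Sum>j\<in>{1..N}. measure_pmf.expectation (map_pmf (h j) (Pt j)) F /\<^sub>R real (card {1..N}))"
    using N fin by (intro pmf_expectation_bind_pmf_of_set) auto
  also have "\<dots> = (\<Sum>j=1..N. measure_pmf.expectation (Pt j) (\<lambda>\<tau>. F (h j \<tau>)) / real N)"
    by (simp add: divide_inverse mult.commute)
  finally show ?thesis by (simp add: sum_divide_distrib)
qed

lemma ustar_id:
  assumes q: "q i l j \<ge> 0" and r: "r i l j \<ge> 0" and P: "Psum p i l j - q i l j - r i l j \<ge> 0"
  shows "Psum p i l j * (ustar uL uU uh p q r i l j - s) =
     (uL i - uh j i) * q i l j + (uU i - uh j i) * r i l j + Psum p i l j * (uh j i - s)"
proof (cases "Psum p i l j = 0")
  case True
  hence "q i l j = 0" "r i l j = 0" using q r P by auto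
  thus ?thesis using True by (simp add: ustar_def)
next
  case False
  thus ?thesis by (simp add: ustar_def field_simps)
qed

lemma ustar_range:
  assumes q: "q i l j \<ge> 0" and r: "r i l j \<ge> 0" and P: "Psum p i l j - q i l j - r i l j \<ge> 0"
    and u: "uL i \<le> uh j i" "uh j i \<le> uU i"
  shows "uL i \<le> ustar uL uU uh p q r i l j \<and> ustar uL uU uh p q r i l j \<le> uU i"
proof (cases "Psum p i l j = 0")
  case True
  hence "q i l j = 0" "r i l j = 0" using q r P by auto
  thus ?thesis using True u by (simp add: ustar_def)
next
  case False
  let ?P = "Psum p i l j"
  have Pp: "?P > 0" using False q r P by auto
  have e1: "ustar uL uU uh p q r i l j - uL i = ((?P - q i l j) * (uh j i - uL i) + r i l j * (uU i - uh j i)) / ?P"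
    using Pp by (simp add: ustar_def field_simps)
  have e2: "uU i - ustar uL uU uh p q r i l j = ((?P - r i l j) * (uU i - uh j i) + q i l j * (uh j i - uL i)) / ?P"
    using Pp by (simp add: ustar_def field_simps)
  have "0 \<le> ((?P - q i l j) * (uh j i - uL i) + r i l j * (uU i - uh j i)) / ?P"
    using Pp q r P u by (intro divide_nonneg_pos add_nonneg_nonneg mult_nonneg_nonneg) auto
  moreover have "0 \<le> ((?P - r i l j) * (uU i - uh j i) + q i l j * (uh j i - uL i)) / ?P"
    using Pp q r P u by (intro divide_nonneg_pos add_nonneg_nonneg mult_nonneg_nonneg) auto
  ultimately show ?thesis using e1 e2 by linarith
qed

lemma ustar_dist:
  assumes q: "q i l j \<ge> 0" and r: "r i l j \<ge> 0" and P: "Psum p i l j - q i l j - r i l j \<ge> 0"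
    and u: "uL i \<le> uh j i" "uh j i \<le> uU i"
  shows "Psum p i l j * \<bar>ustar uL uU uh p q r i l j - uh j i\<bar> \<le>
     (uh j i - uL i) * q i l j + (uU i - uh j i) * r i l j"
proof -
  have "Psum p i l j \<ge> 0" using q r P by auto
  hence "Psum p i l j * \<bar>ustar uL uU uh p q r i l j - uh j i\<bar> = \<bar>Psum p i l j * (ustar uL uU uh p q r i l j - uh j i)\<bar>"
    by (simp add: abs_mult)
  also have "Psum p i l j * (ustar uL uU uh p q r i l j - uh j i) = (uL i - uh j i) * q i l j + (uU i - uh j i) * r i l j"
    using ustar_id[where q=q and r=r and p=p and i=i and l=l and j=j and uL=uL and uU=uU and uh=uh and s="uh j i", OF q r P] by simp
  also have "\<bar>(uL i - uh j i) * q i l j + (uU i - uh j i) * r i l j\<bar> \<le> (uh j i - uL i) * q i l j + (uU i - uh j i) * r i l j"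
  proof -
    have "(uL i - uh j i) * q i l j \<le> 0" using q u by (simp add: mult_nonpos_nonneg)
    moreover have "(uU i - uh j i) * r i l j \<ge> 0" using r u by simp
    ultimately show ?thesis by (simp add: abs_le_iff algebra_simps)
  qed
  finally show ?thesis .
qed


lemma exp_cong_supp: "(\<And>x. x \<in> set_pmf P \<Longrightarrow> f x = g x) \<Longrightarrow>
    measure_pmf.expectation P f = measure_pmf.expectation P (g :: _ \<Rightarrow> real)"
  by (intro integral_cong_AE) (auto simp: AE_measure_pmf_iff)

lemma exp_mono_supp: "finite (set_pmf P) \<Longrightarrow> (\<And>x. x \<in> set_pmf P \<Longrightarrow> f x \<le> g x) \<Longrightarrow>
    measure_pmf.expectation P f \<le> measure_pmf.expectation P (g :: _ \<Rightarrow> real)"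
  by (intro integral_mono_AE integrable_measure_pmf_finite) (auto simp: AE_measure_pmf_iff)

lemma space_Mn: "space (Mn n) = PiE {1..n} (\<lambda>_. UNIV)"
  by (simp add: Mn_def space_PiM)

lemma Uset_sets: "Uset n uL uU \<in> sets (Mn n)"
  unfolding Uset_def Mn_def by (intro sets_PiM_I_finite) auto

lemma Uset_space: "Uset n uL uU \<subseteq> space (Mn n)"
  unfolding Uset_def space_Mn by (auto simp: PiE_iff)

lemma comp_meas:
  assumes "i \<in> {1..n}"
  shows "(\<lambda>x. fst x i) \<in> borel_measurable (Mn n \<Otimes>\<^sub>M Mn n)" "(\<lambda>x. snd x i) \<in> borel_measurable (Mn n \<Otimes>\<^sub>M Mn n)"
proof -
  have c: "(\<lambda>u. u i) \<in> borel_measurable (Mn n)"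
    unfolding Mn_def by (rule measurable_component_singleton) (use assms in auto)
  show "(\<lambda>x. fst x i) \<in> borel_measurable (Mn n \<Otimes>\<^sub>M Mn n)"
    by (rule measurable_compose[OF measurable_fst c])
  show "(\<lambda>x. snd x i) \<in> borel_measurable (Mn n \<Otimes>\<^sub>M Mn n)"
    by (rule measurable_compose[OF measurable_snd c])
qed

lemma cost_meas: "(\<lambda>x. ennreal (\<Sum>i=1..n. \<bar>fst x i - snd x i\<bar>)) \<in> borel_measurable (Mn n \<Otimes>\<^sub>M Mn n)"
proof -
  have "(\<lambda>x. \<Sum>i=1..n. \<bar>fst x i - snd x i\<bar>) \<in> borel_measurable (Mn n \<Otimes>\<^sub>M Mn n)"
    using comp_meas by (intro borel_measurable_sum borel_measurable_abs borel_measurable_diff) auto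
  thus ?thesis by measurable
qed


lemma qstar_thm:
  fixes n N :: nat and C eps :: real
    and c d uL uU s :: "nat \<Rightarrow> real" and uh :: "nat \<Rightarrow> nat \<Rightarrow> real"
    and p q r :: "nat \<Rightarrow> nat \<Rightarrow> nat \<Rightarrow> real" and Pt :: "nat \<Rightarrow> (nat \<times> nat \<Rightarrow> nat) pmf"
  assumes n: "n \<ge> 1" and N: "N \<ge> 1"
    and c: "\<forall>i\<in>{1..n}. c i \<ge> 0" and d: "\<forall>i\<in>{1..n}. d i \<ge> 0" and C: "C \<ge> 0"
    and dc: "\<forall>i\<in>{1..n-1}. d (i+1) - d i \<le> c (i+1)"
    and uhU: "\<forall>j\<in>{1..N}. \<forall>i\<in>{1..n}. uL i \<le> uh j i \<and> uh j i \<le> uU i"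
    and feas: "LP_feasible n N uL uU uh eps p q r"
    and Pt: "\<forall>j\<in>{1..N}. has_marginals n p j (Pt j)"
  shows "Qstar n N uL uU uh p q r Pt \<in> Dball n uL uU N uh eps"
    and "LP_obj n N c d C uL uU uh s p q r \<le> (\<integral>u. fval n c d C s u \<partial>(Qstar n N uL uU uh p q r Pt))"
proof -
  have fe1: "(1 / real N) * (\<Sum>j=1..N. \<Sum>i=1..n. \<Sum>l=i..n+1.
        (uh j i - uL i) * q i l j + (uU i - uh j i) * r i l j) \<le> eps"
    and fe3: "\<And>i l j. i\<in>{1..n} \<Longrightarrow> l\<in>{i..n+1} \<Longrightarrow> j\<in>{1..N} \<Longrightarrow> Psum p i l j - q i l j - r i l j \<ge> 0"
    and fe4: "\<And>i l j. i\<in>{1..n} \<Longrightarrow> l\<in>{i..n+1} \<Longrightarrow> j\<in>{1..N} \<Longrightarrow> q i l j \<ge> 0 \<and> r i l j \<ge> 0"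
    using feas unfolding LP_feasible_def by auto
  define U where "U = uvec n uL uU uh p q r"
  define PP where "PP = bind_pmf (pmf_of_set {1..N}) (\<lambda>j. map_pmf (U j) (Pt j))"
  have Qeq: "Qstar n N uL uU uh p q r Pt = distr (measure_pmf PP) (Mn n) (\<lambda>x. x)"
    by (simp add: Qstar_def PP_def U_def)
  have fin: "\<forall>j\<in>{1..N}. finite (set_pmf (Pt j))" using Pt hm_finite by blast
  have PtT: "\<And>j \<tau>. j \<in> {1..N} \<Longrightarrow> \<tau> \<in> set_pmf (Pt j) \<Longrightarrow> \<tau> \<in> Tset n"
    using Pt unfolding has_marginals_def by blast
  have Ui: "\<And>j \<tau> i. \<tau> \<in> Tset n \<Longrightarrow> i \<in> {1..n} \<Longrightarrow> U j \<tau> i = ustar uL uU uh p q r i (sig n \<tau> i) j"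
    unfolding U_def by (rule uvec_sig)
  have sigr: "\<And>\<tau> i. \<tau> \<in> Tset n \<Longrightarrow> i \<in> {1..n} \<Longrightarrow> sig n \<tau> i \<in> {i..n+1}"
    using sig_props(1) by auto
  have UinU: "U j \<tau> \<in> Uset n uL uU" if j: "j \<in> {1..N}" and t: "\<tau> \<in> Tset n" for j \<tau>
    unfolding Uset_def PiE_iff
  proof (intro conjI ballI)
    fix i assume i: "i \<in> {1..n}"
    have sr: "sig n \<tau> i \<in> {i..n+1}" by (rule sigr[OF t i])
    have "uL i \<le> ustar uL uU uh p q r i (sig n \<tau> i) j \<and> ustar uL uU uh p q r i (sig n \<tau> i) j \<le> uU i"
      by (rule ustar_range) (use fe3[OF i sr j] fe4[OF i sr j] uhU i j in auto)
    thus "U j \<tau> i \<in> {uL i..uU i}" using Ui[OF t i] by simp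
  next
    show "U j \<tau> \<in> extensional {1..n}" by (simp add: U_def uvec_def)
  qed
  have PPset: "set_pmf PP = (\<Union>j\<in>{1..N}. U j ` set_pmf (Pt j))"
    using N by (simp add: PP_def)
  have PPU: "set_pmf PP \<subseteq> Uset n uL uU" unfolding PPset using UinU PtT by blast
  have PPsp: "set_pmf PP \<subseteq> space (Mn n)" using PPU Uset_space by blast
  have fm: "(\<lambda>u. fval n c d C s u) \<in> borel_measurable (Mn n)" by (rule fval_meas[OF c d C dc n])
  define K where "K i l j = pic n c d C i l * (ustar uL uU uh p q r i l j - s i)" for i l j
  have "(\<integral>u. fval n c d C s u \<partial>(Qstar n N uL uU uh p q r Pt)) = measure_pmf.expectation PP (fval n c d C s)"
    unfolding Qeq by (rule dpi_integral[OF PPsp fm])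
  also have "\<dots> = (\<Sum>j=1..N. measure_pmf.expectation (Pt j) (\<lambda>\<tau>. fval n c d C s (U j \<tau>))) / real N"
    unfolding PP_def by (rule exp_bind_set[OF N fin])
  also have "\<dots> \<ge> (\<Sum>j=1..N. measure_pmf.expectation (Pt j) (\<lambda>\<tau>. \<Sum>i=1..n. \<Sum>l=i..n+1. coef \<tau> i l * K i l j)) / real N"
  proof (intro divide_right_mono sum_mono exp_mono_supp)
    fix j assume "j \<in> {1..N}" thus "finite (set_pmf (Pt j))" using fin by blast
  next
    fix j \<tau> assume j: "j \<in> {1..N}" and t': "\<tau> \<in> set_pmf (Pt j)"
    have t: "\<tau> \<in> Tset n" by (rule PtT[OF j t'])
    have "(\<Sum>i=1..n. \<Sum>l=i..n+1. coef \<tau> i l * K i l j) = (\<Sum>i=1..n. K i (sig n \<tau> i) j)"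
      by (intro sum.cong refl onehot_sum[OF t]) auto
    also have "\<dots> = (\<Sum>i=1..n. pic n c d C i (sig n \<tau> i) * (U j \<tau> i - s i))"
      using Ui[OF t] by (intro sum.cong refl) (simp add: K_def)
    also have "\<dots> \<le> fval n c d C s (U j \<tau>)"
      by (rule fval_props(2)[OF c d C dc n sig_valid[OF t]])
    finally show "(\<Sum>i=1..n. \<Sum>l=i..n+1. coef \<tau> i l * K i l j) \<le> fval n c d C s (U j \<tau>)" .
  qed simp
  also have "(\<Sum>j=1..N. measure_pmf.expectation (Pt j) (\<lambda>\<tau>. \<Sum>i=1..n. \<Sum>l=i..n+1. coef \<tau> i l * K i l j)) / real N
      = (\<Sum>j=1..N. \<Sum>i=1..n. \<Sum>l=i..n+1. Psum p i l j * K i l j) / real N"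
    using Pt by (intro arg_cong[where f="\<lambda>x. x / real N"] sum.cong refl exp_coef_sum) auto
  also have "\<dots> = LP_obj n N c d C uL uU uh s p q r"
  proof -
    have "(\<Sum>j=1..N. \<Sum>i=1..n. \<Sum>l=i..n+1. Psum p i l j * K i l j) =
      (\<Sum>j=1..N. \<Sum>i=1..n. \<Sum>l=i..n+1. pic n c d C i l *
        ((uL i - uh j i) * q i l j + (uU i - uh j i) * r i l j + Psum p i l j * (uh j i - s i)))"
    proof (intro sum.cong refl)
      fix j i l assume j: "j \<in> {1..N}" and i: "i \<in> {1..n}" and l: "l \<in> {i..n+1}"
      have "Psum p i l j * (ustar uL uU uh p q r i l j - s i) =
         (uL i - uh j i) * q i l j + (uU i - uh j i) * r i l j + Psum p i l j * (uh j i - s i)"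
        by (rule ustar_id) (use fe3[OF i l j] fe4[OF i l j] in auto)
      thus "Psum p i l j * K i l j = pic n c d C i l *
        ((uL i - uh j i) * q i l j + (uU i - uh j i) * r i l j + Psum p i l j * (uh j i - s i))"
        unfolding K_def by (metis mult.left_commute)
    qed
    thus ?thesis unfolding LP_obj_def by simp
  qed
  finally show "LP_obj n N c d C uL uU uh s p q r \<le> (\<integral>u. fval n c d C s u \<partial>(Qstar n N uL uU uh p q r Pt))" .
  define ur where "ur j = restrict (uh j) {1..n}" for j
  define PW where "PW = bind_pmf (pmf_of_set {1..N}) (\<lambda>j. map_pmf (\<lambda>\<tau>. (U j \<tau>, ur j)) (Pt j))"
  define W where "W = distr (measure_pmf PW) (Mn n \<Otimes>\<^sub>M Mn n) (\<lambda>x. x)"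
  have PWset: "set_pmf PW = (\<Union>j\<in>{1..N}. (\<lambda>\<tau>. (U j \<tau>, ur j)) ` set_pmf (Pt j))"
    using N by (simp add: PW_def)
  have urs: "ur j \<in> space (Mn n)" for j by (simp add: ur_def space_Mn)
  have PWsp: "set_pmf PW \<subseteq> space (Mn n \<Otimes>\<^sub>M Mn n)"
    unfolding PWset space_pair_measure using PPsp PPset urs by blast
  have mf: "map_pmf fst PW = PP" by (simp add: PW_def PP_def map_bind_pmf map_pmf_comp)
  have "map_pmf snd PW = bind_pmf (pmf_of_set {1..N}) (\<lambda>j. return_pmf (ur j))"
    by (simp add: PW_def map_bind_pmf map_pmf_comp)
  also have "\<dots> = map_pmf ur (pmf_of_set {1..N})" by (simp add: map_pmf_def)
  finally have ms: "map_pmf snd PW = map_pmf ur (pmf_of_set {1..N})" .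
  have msp: "set_pmf (map_pmf snd PW) \<subseteq> space (Mn n)" using PWsp by (auto simp: space_pair_measure)
  have mfp: "set_pmf (map_pmf fst PW) \<subseteq> space (Mn n)" using PWsp by (auto simp: space_pair_measure)
  have coup: "coupling n (Qstar n N uL uU uh p q r Pt) (empirical n N uh) W"
    unfolding coupling_def
  proof (intro conjI)
    show "prob_space W" unfolding W_def by (rule dpi_prob[OF PWsp])
    show "sets W = sets (Mn n \<Otimes>\<^sub>M Mn n)" unfolding W_def by simp
    show "distr W (Mn n) fst = Qstar n N uL uU uh p q r Pt"
      unfolding W_def Qeq dpi_map[OF PWsp measurable_fst mfp] mf ..
    show "distr W (Mn n) snd = empirical n N uh"
      unfolding W_def empirical_def dpi_map[OF PWsp measurable_snd msp] ms ur_def ..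
  qed
  define cst where "cst x = (\<Sum>i=1..n. \<bar>fst x i - snd x i\<bar>)" for x :: "(nat \<Rightarrow> real) \<times> (nat \<Rightarrow> real)"
  have finPW: "finite (set_pmf PW)" unfolding PWset using fin by auto
  have "wass1 n (Qstar n N uL uU uh p q r Pt) (empirical n N uh) \<le> (\<integral>\<^sup>+ x. ennreal (cst x) \<partial>W)"
    unfolding wass1_def cst_def by (rule INF_lower) (use coup in simp)
  also have "\<dots> = (\<integral>\<^sup>+ x. ennreal (cst x) \<partial>measure_pmf PW)"
    unfolding W_def cst_def by (rule dpi_nn_integral[OF PWsp cost_meas])
  also have "\<dots> = ennreal (measure_pmf.expectation PW cst)"
    by (intro nn_integral_eq_integral integrable_measure_pmf_finite[OF finPW]) (auto simp: cst_def)
  also have "measure_pmf.expectation PW cst \<le> eps"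
  proof -
    have "measure_pmf.expectation PW cst = (\<Sum>j=1..N. measure_pmf.expectation (Pt j) (\<lambda>\<tau>. cst (U j \<tau>, ur j))) / real N"
      unfolding PW_def by (rule exp_bind_set[OF N fin])
    also have "\<dots> = (\<Sum>j=1..N. measure_pmf.expectation (Pt j)
        (\<lambda>\<tau>. \<Sum>i=1..n. \<Sum>l=i..n+1. coef \<tau> i l * \<bar>ustar uL uU uh p q r i l j - uh j i\<bar>)) / real N"
    proof (intro arg_cong[where f="\<lambda>x. x / real N"] sum.cong refl exp_cong_supp)
      fix j \<tau> assume j: "j \<in> {1..N}" and t': "\<tau> \<in> set_pmf (Pt j)"
      have t: "\<tau> \<in> Tset n" by (rule PtT[OF j t'])
      have "(\<Sum>i=1..n. \<Sum>l=i..n+1. coef \<tau> i l * \<bar>ustar uL uU uh p q r i l j - uh j i\<bar>) =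
          (\<Sum>i=1..n. \<bar>ustar uL uU uh p q r i (sig n \<tau> i) j - uh j i\<bar>)"
        by (intro sum.cong refl onehot_sum[OF t]) auto
      also have "\<dots> = cst (U j \<tau>, ur j)"
        unfolding cst_def using Ui[OF t] by (intro sum.cong refl) (simp add: ur_def)
      finally show "cst (U j \<tau>, ur j) = (\<Sum>i=1..n. \<Sum>l=i..n+1. coef \<tau> i l * \<bar>ustar uL uU uh p q r i l j - uh j i\<bar>)"
        by simp
    qed
    also have "\<dots> = (\<Sum>j=1..N. \<Sum>i=1..n. \<Sum>l=i..n+1. Psum p i l j * \<bar>ustar uL uU uh p q r i l j - uh j i\<bar>) / real N"
      using Pt by (intro arg_cong[where f="\<lambda>x. x / real N"] sum.cong refl exp_coef_sum) auto
    also have "\<dots> \<le> (\<Sum>j=1..N. \<Sum>i=1..n. \<Sum>l=i..n+1. (uh j i - uL i) * q i l j + (uU i - uh j i) * r i l j) / real N"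
    proof (intro divide_right_mono sum_mono)
      fix j i l assume j: "j \<in> {1..N}" and i: "i \<in> {1..n}" and l: "l \<in> {i..n+1}"
      show "Psum p i l j * \<bar>ustar uL uU uh p q r i l j - uh j i\<bar> \<le> (uh j i - uL i) * q i l j + (uU i - uh j i) * r i l j"
        by (rule ustar_dist) (use fe3[OF i l j] fe4[OF i l j] uhU i j in auto)
    qed simp
    also have "\<dots> \<le> eps" using fe1 by simp
    finally show ?thesis .
  qed
  hence "ennreal (measure_pmf.expectation PW cst) \<le> ennreal eps" by (rule ennreal_leI)
  finally have wle: "wass1 n (Qstar n N uL uU uh p q r Pt) (empirical n N uh) \<le> ennreal eps" .
  have em: "emeasure (Qstar n N uL uU uh p q r Pt) (Uset n uL uU) = 1"
  proof -
    have "emeasure (Qstar n N uL uU uh p q r Pt) (Uset n uL uU) = emeasure (measure_pmf PP) (Uset n uL uU)"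
      unfolding Qeq by (rule dpi_emeasure[OF PPsp Uset_sets])
    also have "\<dots> = 1" using PPU by (intro measure_pmf.emeasure_eq_1_AE) (auto simp: AE_measure_pmf_iff)
    finally show ?thesis .
  qed
  show "Qstar n N uL uU uh p q r Pt \<in> Dball n uL uU N uh eps"
    unfolding Dball_def using wle em dpi_prob[OF PPsp] Qeq by (auto simp: Qstar_def)
qed


lemma lg_step_ind:
  assumes "i \<le> n" "Suc i \<le> l" "lg n s u i = l"
  shows "lg n s u (Suc i) = l"
proof (cases "gW s u i \<le> 0")
  case True thus ?thesis using lg_le0[OF assms(1) True] assms by simp
next
  case False thus ?thesis using lg_pos[OF assms(1)] assms by simp
qed

lemma lg_telescope:
  assumes "1 \<le> i" "i \<le> l" "l \<le> n+1"
  shows "(\<Sum>k=1..i. of_bool (lg n s u k = l \<and> lg n s u (k-1) \<noteq> l) :: real) = of_bool (lg n s u i = l)"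
  using assms
proof (induction i)
  case 0 thus ?case by simp
next
  case (Suc i)
  show ?case
  proof (cases "i = 0")
    case True thus ?thesis using Suc.prems lg_0[of n s u] by simp
  next
    case False
    have IH: "(\<Sum>k=1..i. of_bool (lg n s u k = l \<and> lg n s u (k-1) \<noteq> l) :: real) = of_bool (lg n s u i = l)"
      using Suc False by simp
    have imp: "lg n s u i = l \<Longrightarrow> lg n s u (Suc i) = l" using lg_step_ind[of i n l s u] Suc.prems by simp
    have "(\<Sum>k=1..Suc i. of_bool (lg n s u k = l \<and> lg n s u (k-1) \<noteq> l) :: real) =
        of_bool (lg n s u i = l) + of_bool (lg n s u (Suc i) = l \<and> lg n s u i \<noteq> l)"
      using IH by simp
    also have "\<dots> = of_bool (lg n s u (Suc i) = l)" using imp by auto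
    finally show ?thesis .
  qed
qed

lemma lg_onehot:
  assumes "i \<in> {1..n}"
  shows "(\<Sum>l=i..n+1. of_bool (lg n s u i = l) * F l) = (F (lg n s u i) :: real)"
proof -
  have r: "lg n s u i \<in> {i..n+1}" using lg_bounds[of i n s u] assms by auto
  have "(\<Sum>l=i..n+1. of_bool (lg n s u i = l) * F l) = (\<Sum>l=i..n+1. if l = lg n s u i then F l else 0)"
    by (intro sum.cong) auto
  also have "\<dots> = F (lg n s u i)" using r by simp
  finally show ?thesis .
qed

locale ubW =
  fixes n N :: nat and c d uL uU s :: "nat \<Rightarrow> real" and C eps :: real
    and uh :: "nat \<Rightarrow> nat \<Rightarrow> real" and W :: "((nat \<Rightarrow> real) \<times> (nat \<Rightarrow> real)) measure"
  assumes n1: "n \<ge> 1" and N1: "N \<ge> 1"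
    and cnn: "\<forall>i\<in>{1..n}. c i \<ge> 0" and dnn: "\<forall>i\<in>{1..n}. d i \<ge> 0" and Cnn: "C \<ge> 0"
    and dc: "\<forall>i\<in>{1..n-1}. d (i+1) - d i \<le> c (i+1)"
    and uhU: "\<forall>j\<in>{1..N}. \<forall>i\<in>{1..n}. uL i \<le> uh j i \<and> uh j i \<le> uU i"
    and Wp: "prob_space W" and sW: "sets W = sets (Mn n \<Otimes>\<^sub>M Mn n)"
    and AEU: "AE x in W. fst x \<in> Uset n uL uU"
    and AEV: "AE x in W. \<exists>j\<in>{1..N}. snd x = restrict (uh j) {1..n}"
    and Wsnd: "\<And>j. j \<in> {1..N} \<Longrightarrow> measure W {x\<in>space W. snd x = restrict (uh j) {1..n}} =
        real (card {j'\<in>{1..N}. restrict (uh j') {1..n} = restrict (uh j) {1..n}}) / real N"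
begin

interpretation W: prob_space W by (rule Wp)

definition ur :: "nat \<Rightarrow> nat \<Rightarrow> real" where "ur j = restrict (uh j) {1..n}"
definition mm :: "nat \<Rightarrow> nat" where "mm j = card {j'\<in>{1..N}. ur j' = ur j}"
definition Sj :: "nat \<Rightarrow> ((nat \<Rightarrow> real) \<times> (nat \<Rightarrow> real)) set" where "Sj j = {x\<in>space W. snd x = ur j}"
definition om :: "nat \<Rightarrow> (nat \<Rightarrow> real) \<times> (nat \<Rightarrow> real) \<Rightarrow> real" where
  "om j x = indicator (Sj j) x / real (mm j)"
definition L :: "(nat \<Rightarrow> real) \<times> (nat \<Rightarrow> real) \<Rightarrow> nat \<Rightarrow> nat" where "L x i = lg n s (fst x) i"

lemma meas_cong: "measurable W M = measurable (Mn n \<Otimes>\<^sub>M Mn n) M"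
  by (rule measurable_cong_sets[OF sW refl])

lemma space_W: "space W = space (Mn n \<Otimes>\<^sub>M Mn n)"
  by (rule sets_eq_imp_space_eq[OF sW])

lemma fst_meas: "i \<in> {1..n} \<Longrightarrow> (\<lambda>x. fst x i) \<in> borel_measurable W"
  unfolding meas_cong by (rule comp_meas(1))

lemma snd_meas: "i \<in> {1..n} \<Longrightarrow> (\<lambda>x. snd x i) \<in> borel_measurable W"
  unfolding meas_cong by (rule comp_meas(2))

lemma L_meas: "(\<lambda>x. L x i) \<in> measurable W (count_space UNIV)"
  unfolding meas_cong L_def by (rule measurable_compose[OF measurable_fst lg_meas])

lemma L_fun_meas: "(\<lambda>x. (g (L x i) :: real)) \<in> borel_measurable W"
  by (rule measurable_compose[OF L_meas]) simp

lemma L_fun2_meas: "(\<lambda>x. (g (L x i) (L x k) :: real)) \<in> borel_measurable W"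
proof -
  have "(\<lambda>x. (L x i, L x k)) \<in> measurable W (count_space UNIV \<Otimes>\<^sub>M count_space UNIV)"
    using L_meas by (intro measurable_Pair) auto
  moreover have "(\<lambda>(a, b). g a b) \<in> borel_measurable (count_space UNIV \<Otimes>\<^sub>M (count_space UNIV :: nat measure))"
    by (simp add: pair_measure_countable)
  ultimately have "(\<lambda>x. (\<lambda>(a, b). g a b) (L x i, L x k)) \<in> borel_measurable W"
    by (rule measurable_compose)
  thus ?thesis by simp
qed

lemma Sj_sets: "Sj j \<in> sets W"
proof -
  have "{ur j} \<in> sets (Mn n)"
  proof -
    have "{ur j} = PiE {1..n} (\<lambda>i. {ur j i})" by (auto simp: ur_def PiE_iff extensional_def fun_eq_iff)
    also have "\<dots> \<in> sets (Mn n)" unfolding Mn_def by (intro sets_PiM_I_finite) auto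
    finally show ?thesis .
  qed
  hence "snd -` {ur j} \<inter> space W \<in> sets W"
    by (intro measurable_sets[OF _ \<open>{ur j} \<in> sets (Mn n)\<close>]) (simp add: meas_cong)
  moreover have "snd -` {ur j} \<inter> space W = Sj j" by (auto simp: Sj_def)
  ultimately show ?thesis by simp
qed

lemma om_meas: "om j \<in> borel_measurable W"
  unfolding om_def by (intro borel_measurable_divide borel_measurable_indicator Sj_sets) simp

lemma mm_pos: assumes j: "j \<in> {1..N}" shows "mm j > 0"
proof -
  have "j \<in> {j'\<in>{1..N}. ur j' = ur j}" using j by simp
  hence "{j'\<in>{1..N}. ur j' = ur j} \<noteq> {}" by blast
  moreover have "finite {j'\<in>{1..N}. ur j' = ur j}" by simp
  ultimately show ?thesis unfolding mm_def using card_gt_0_iff by blast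
qed

lemma om_nonneg: "om j x \<ge> 0" by (simp add: om_def)
lemma om_le1: "j \<in> {1..N} \<Longrightarrow> om j x \<le> 1"
proof -
  assume j: "j \<in> {1..N}"
  have "mm j > 0" by (rule mm_pos[OF j])
  thus ?thesis by (auto simp: om_def indicator_def)
qed

lemma om_snd: "om j x \<noteq> 0 \<Longrightarrow> i \<in> {1..n} \<Longrightarrow> snd x i = uh j i"
  by (auto simp: om_def Sj_def ur_def indicator_def split: if_splits)

lemma om_sum: "AE x in W. (\<Sum>j=1..N. om j x) = 1"
  using AEV AE_space
proof (eventually_elim)
  case (elim x)
  then obtain j0 where j0: "j0 \<in> {1..N}" "snd x = ur j0" by (auto simp: ur_def)
  define J where "J = {j\<in>{1..N}. ur j = snd x}"
  have j0J: "j0 \<in> J" using j0 by (simp add: J_def)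
  have fJ: "finite J" by (simp add: J_def)
  have cJ: "card J > 0" using j0J fJ card_gt_0_iff by blast
  have mmJ: "mm j = card J" if "j \<in> J" for j
  proof -
    have "{j'\<in>{1..N}. ur j' = ur j} = J" using that by (auto simp: J_def)
    thus ?thesis by (simp add: mm_def)
  qed
  have "(\<Sum>j=1..N. om j x) = (\<Sum>j\<in>{1..N}. if j \<in> J then 1 / real (card J) else 0)"
    using elim mmJ by (intro sum.cong refl) (auto simp: om_def Sj_def J_def indicator_def)
  also have "\<dots> = (\<Sum>j\<in>{j\<in>{1..N}. j \<in> J}. 1 / real (card J))"
    by (rule sum.inter_filter[symmetric]) simp
  also have "{j\<in>{1..N}. j \<in> J} = J" by (auto simp: J_def)
  also have "(\<Sum>j\<in>J. 1 / real (card J)) = 1" using cJ by simp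
  finally show ?case .
qed

lemma om_int: assumes j: "j \<in> {1..N}" shows "integral\<^sup>L W (om j) = 1 / real N"
proof -
  have "integral\<^sup>L W (om j) = integral\<^sup>L W (indicator (Sj j)) / real (mm j)"
    unfolding om_def by (rule integral_divide_zero)
  also have "\<dots> = measure W (Sj j) / real (mm j)" using Sj_sets by simp
  also have "measure W (Sj j) = real (mm j) / real N"
    using Wsnd[OF j] by (simp add: Sj_def mm_def ur_def)
  finally show ?thesis using mm_pos[OF j] by simp
qed


lemma AEU_i: "AE x in W. \<forall>i\<in>{1..n}. uL i \<le> fst x i \<and> fst x i \<le> uU i"
  using AEU by eventually_elim (auto simp: Uset_def PiE_iff)

lemma AEV_i: "AE x in W. \<forall>i\<in>{1..n}. uL i \<le> snd x i \<and> snd x i \<le> uU i"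
  using AEV
proof eventually_elim
  case (elim x)
  then obtain j where j: "j \<in> {1..N}" "snd x = restrict (uh j) {1..n}" by blast
  thus ?case using uhU by auto
qed

lemma int_b: "j \<in> {1..N} \<Longrightarrow> integrable W (\<lambda>x. om j x * of_bool (P (L x i) (L x k)))"
proof -
  assume j: "j \<in> {1..N}"
  have m: "(\<lambda>x. om j x * of_bool (P (L x i) (L x k))) \<in> borel_measurable W"
    using om_meas L_fun2_meas by (intro borel_measurable_times) auto
  show ?thesis
    by (rule W.integrable_const_bound[where B=1, OF _ m]) (use om_le1[OF j] om_nonneg in auto)
qed

lemma int_bf: assumes j: "j \<in> {1..N}" and i: "i \<in> {1..n}"
  shows "integrable W (\<lambda>x. om j x * of_bool (P (L x i') (L x k)) * (fst x i - a))"
proof -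
  have m: "(\<lambda>x. om j x * of_bool (P (L x i') (L x k)) * (fst x i - a)) \<in> borel_measurable W"
    using om_meas L_fun2_meas fst_meas[OF i] by (intro borel_measurable_times borel_measurable_diff) auto
  show ?thesis
  proof (rule W.integrable_const_bound[where B="\<bar>uL i\<bar> + \<bar>uU i\<bar> + \<bar>a\<bar>", OF _ m])
    show "AE x in W. norm (om j x * of_bool (P (L x i') (L x k)) * (fst x i - a)) \<le> \<bar>uL i\<bar> + \<bar>uU i\<bar> + \<bar>a\<bar>"
      using AEU_i
    proof eventually_elim
      case (elim x)
      have "uL i \<le> fst x i \<and> fst x i \<le> uU i" using elim i by blast
      hence f: "\<bar>fst x i - a\<bar> \<le> \<bar>uL i\<bar> + \<bar>uU i\<bar> + \<bar>a\<bar>" by linarith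
      have o: "\<bar>om j x * of_bool (P (L x i') (L x k))\<bar> \<le> 1" using om_le1[OF j] om_nonneg[of j x] by auto
      have "\<bar>om j x * of_bool (P (L x i') (L x k)) * (fst x i - a)\<bar> \<le> 1 * (\<bar>uL i\<bar> + \<bar>uU i\<bar> + \<bar>a\<bar>)"
        unfolding abs_mult[of "om j x * _"] by (rule mult_mono) (use o f in auto)
      thus ?case by simp
    qed
  qed
qed

lemma int_bd: assumes j: "j \<in> {1..N}" and i: "i \<in> {1..n}"
  shows "integrable W (\<lambda>x. om j x * of_bool (P (L x i') (L x k)) * \<bar>fst x i - snd x i\<bar>)"
proof -
  have m: "(\<lambda>x. om j x * of_bool (P (L x i') (L x k)) * \<bar>fst x i - snd x i\<bar>) \<in> borel_measurable W"
    using om_meas L_fun2_meas fst_meas[OF i] snd_meas[OF i]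
    by (intro borel_measurable_times borel_measurable_diff borel_measurable_abs) auto
  show ?thesis
  proof (rule W.integrable_const_bound[where B="2 * \<bar>uL i\<bar> + 2 * \<bar>uU i\<bar>", OF _ m])
    show "AE x in W. norm (om j x * of_bool (P (L x i') (L x k)) * \<bar>fst x i - snd x i\<bar>) \<le> 2 * \<bar>uL i\<bar> + 2 * \<bar>uU i\<bar>"
      using AEU_i AEV_i
    proof eventually_elim
      case (elim x)
      have "uL i \<le> fst x i \<and> fst x i \<le> uU i" "uL i \<le> snd x i \<and> snd x i \<le> uU i" using elim i by blast+
      hence f: "\<bar>fst x i - snd x i\<bar> \<le> 2 * \<bar>uL i\<bar> + 2 * \<bar>uU i\<bar>" by linarith
      have o: "\<bar>om j x * of_bool (P (L x i') (L x k))\<bar> \<le> 1" using om_le1[OF j] om_nonneg[of j x] by auto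
      have "\<bar>om j x * of_bool (P (L x i') (L x k)) * \<bar>fst x i - snd x i\<bar>\<bar> \<le> 1 * (2 * \<bar>uL i\<bar> + 2 * \<bar>uU i\<bar>)"
        unfolding abs_mult[of "om j x * _"] by (rule mult_mono) (use o f in auto)
      thus ?case by simp
    qed
  qed
qed

lemma swap_sum:
  assumes int: "\<And>j i l. j \<in> {1..N} \<Longrightarrow> i \<in> {1..n} \<Longrightarrow> l \<in> {i..n+1} \<Longrightarrow>
      integrable W (\<lambda>x. om j x * of_bool (L x i = l) * G i l x)"
    and meas: "(\<lambda>x. \<Sum>i=1..n. G i (L x i) x) \<in> borel_measurable W"
  shows "(\<Sum>j=1..N. \<Sum>i=1..n. \<Sum>l=i..n+1. \<integral>x. om j x * of_bool (L x i = l) * G i l x \<partial>W)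
       = (\<integral>x. (\<Sum>i=1..n. G i (L x i) x) \<partial>W)"
proof -
  have i1: "integrable W (\<lambda>x. \<Sum>l=i..n+1. om j x * of_bool (L x i = l) * G i l x)"
    if "j \<in> {1..N}" "i \<in> {1..n}" for j i
    by (rule Bochner_Integration.integrable_sum, rule int) (use that in auto)
  have i2: "integrable W (\<lambda>x. \<Sum>i=1..n. \<Sum>l=i..n+1. om j x * of_bool (L x i = l) * G i l x)"
    if "j \<in> {1..N}" for j
    by (rule Bochner_Integration.integrable_sum, rule i1) (use that in auto)
  have "(\<Sum>j=1..N. \<Sum>i=1..n. \<Sum>l=i..n+1. \<integral>x. om j x * of_bool (L x i = l) * G i l x \<partial>W)
     = (\<Sum>j=1..N. \<Sum>i=1..n. \<integral>x. (\<Sum>l=i..n+1. om j x * of_bool (L x i = l) * G i l x) \<partial>W)"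
  proof (intro sum.cong refl)
    fix j i assume "j \<in> {1..N}" "i \<in> {1..n}"
    show "(\<Sum>l=i..n+1. \<integral>x. om j x * of_bool (L x i = l) * G i l x \<partial>W) =
      (\<integral>x. (\<Sum>l=i..n+1. om j x * of_bool (L x i = l) * G i l x) \<partial>W)"
      by (rule Bochner_Integration.integral_sum[symmetric], rule int) (use \<open>j \<in> _\<close> \<open>i \<in> _\<close> in auto)
  qed
  also have "\<dots> = (\<Sum>j=1..N. \<integral>x. (\<Sum>i=1..n. \<Sum>l=i..n+1. om j x * of_bool (L x i = l) * G i l x) \<partial>W)"
  proof (intro sum.cong refl)
    fix j assume "j \<in> {1..N}"
    show "(\<Sum>i=1..n. \<integral>x. (\<Sum>l=i..n+1. om j x * of_bool (L x i = l) * G i l x) \<partial>W) =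
      (\<integral>x. (\<Sum>i=1..n. \<Sum>l=i..n+1. om j x * of_bool (L x i = l) * G i l x) \<partial>W)"
      by (rule Bochner_Integration.integral_sum[symmetric], rule i1) (use \<open>j \<in> _\<close> in auto)
  qed
  also have "\<dots> = (\<integral>x. (\<Sum>j=1..N. \<Sum>i=1..n. \<Sum>l=i..n+1. om j x * of_bool (L x i = l) * G i l x) \<partial>W)"
    by (rule Bochner_Integration.integral_sum[symmetric], rule i2) auto
  also have "\<dots> = (\<integral>x. (\<Sum>i=1..n. G i (L x i) x) \<partial>W)"
  proof (intro integral_cong_AE)
    show "AE x in W. (\<Sum>j=1..N. \<Sum>i=1..n. \<Sum>l=i..n+1. om j x * of_bool (L x i = l) * G i l x) = (\<Sum>i=1..n. G i (L x i) x)"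
      using om_sum
    proof eventually_elim
      case (elim x)
      have "(\<Sum>j=1..N. \<Sum>i=1..n. \<Sum>l=i..n+1. om j x * of_bool (L x i = l) * G i l x)
          = (\<Sum>j=1..N. om j x * (\<Sum>i=1..n. \<Sum>l=i..n+1. of_bool (L x i = l) * G i l x))"
        by (simp only: sum_distrib_left mult.assoc)
      also have "(\<Sum>i=1..n. \<Sum>l=i..n+1. of_bool (L x i = l) * G i l x) = (\<Sum>i=1..n. G i (L x i) x)"
        unfolding L_def by (intro sum.cong refl lg_onehot) auto
      also have "(\<Sum>j=1..N. om j x * (\<Sum>i=1..n. G i (L x i) x)) = (\<Sum>j=1..N. om j x) * (\<Sum>i=1..n. G i (L x i) x)"
        by (simp add: sum_distrib_right)
      finally show ?case using elim by simp
    qed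
    have "integrable W (\<lambda>x. \<Sum>j=1..N. \<Sum>i=1..n. \<Sum>l=i..n+1. om j x * of_bool (L x i = l) * G i l x)"
      by (rule Bochner_Integration.integrable_sum, rule i2) auto
    thus "(\<lambda>x. \<Sum>j=1..N. \<Sum>i=1..n. \<Sum>l=i..n+1. om j x * of_bool (L x i = l) * G i l x) \<in> borel_measurable W"
      by (rule borel_measurable_integrable)
  qed (rule meas)
  finally show ?thesis .
qed

end


lemma LP_bdd:
  "bdd_above {LP_obj n N c d C uL uU uh s p q r | p q r. LP_feasible n N uL uU uh eps p q r}"
proof -
  define B where "B = (1 / real N) * (\<Sum>j=1..N. \<Sum>i=1..n. \<Sum>l=i..n+1. \<bar>pic n c d C i l\<bar> *
      (\<bar>uL i - uh j i\<bar> + \<bar>uU i - uh j i\<bar> + \<bar>uh j i - s i\<bar>))"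
  show ?thesis
  proof (rule bdd_aboveI[where M=B])
    fix x assume "x \<in> {LP_obj n N c d C uL uU uh s p q r | p q r. LP_feasible n N uL uU uh eps p q r}"
    then obtain p q r where x: "x = LP_obj n N c d C uL uU uh s p q r" and f: "LP_feasible n N uL uU uh eps p q r"
      by blast
    have f2: "\<And>i j. i\<in>{1..n} \<Longrightarrow> j\<in>{1..N} \<Longrightarrow> (\<Sum>l=i..n+1. Psum p i l j) = 1"
      and f3: "\<And>i l j. i\<in>{1..n} \<Longrightarrow> l\<in>{i..n+1} \<Longrightarrow> j\<in>{1..N} \<Longrightarrow> Psum p i l j - q i l j - r i l j \<ge> 0"
      and f4: "\<And>i l j. i\<in>{1..n} \<Longrightarrow> l\<in>{i..n+1} \<Longrightarrow> j\<in>{1..N} \<Longrightarrow> p i l j \<ge> 0 \<and> q i l j \<ge> 0 \<and> r i l j \<ge> 0"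
      using f unfolding LP_feasible_def by auto
    have Pnn: "Psum p i l j \<ge> 0" if "i\<in>{1..n}" "l\<in>{i..n+1}" "j\<in>{1..N}" for i l j
      using f4 that unfolding Psum_def by (intro sum_nonneg) auto
    have Ple: "Psum p i l j \<le> 1" if i: "i\<in>{1..n}" and l: "l\<in>{i..n+1}" and j: "j\<in>{1..N}" for i l j
    proof -
      have "Psum p i l j \<le> (\<Sum>l'=i..n+1. Psum p i l' j)"
        by (rule member_le_sum) (use l Pnn i j in auto)
      thus ?thesis using f2[OF i j] by simp
    qed
    have "x \<le> (1 / real N) * (\<Sum>j=1..N. \<Sum>i=1..n. \<Sum>l=i..n+1. \<bar>pic n c d C i l\<bar> *
      (\<bar>uL i - uh j i\<bar> + \<bar>uU i - uh j i\<bar> + \<bar>uh j i - s i\<bar>))"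
      unfolding x LP_obj_def
    proof (intro mult_left_mono sum_mono)
      fix j i l assume j: "j \<in> {1..N}" and i: "i \<in> {1..n}" and l: "l \<in> {i..n+1}"
      have q: "0 \<le> q i l j" "q i l j \<le> 1" and r: "0 \<le> r i l j" "r i l j \<le> 1"
        and P: "0 \<le> Psum p i l j" "Psum p i l j \<le> 1"
        using f3[OF i l j] f4[OF i l j] Pnn[OF i l j] Ple[OF i l j] by auto
      have "\<bar>(uL i - uh j i) * q i l j + (uU i - uh j i) * r i l j + Psum p i l j * (uh j i - s i)\<bar>
          \<le> \<bar>uL i - uh j i\<bar> + \<bar>uU i - uh j i\<bar> + \<bar>uh j i - s i\<bar>"
      proof -
        have a1: "\<bar>(uL i - uh j i) * q i l j\<bar> \<le> \<bar>uL i - uh j i\<bar>"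
          using q by (simp add: abs_mult mult_left_le)
        have a2: "\<bar>(uU i - uh j i) * r i l j\<bar> \<le> \<bar>uU i - uh j i\<bar>"
          using r by (simp add: abs_mult mult_left_le)
        have a3: "\<bar>Psum p i l j * (uh j i - s i)\<bar> \<le> \<bar>uh j i - s i\<bar>"
          using P by (simp add: abs_mult mult_left_le_one_le)
        show ?thesis using a1 a2 a3 by linarith
      qed
      hence h: "\<bar>pic n c d C i l\<bar> * \<bar>(uL i - uh j i) * q i l j + (uU i - uh j i) * r i l j + Psum p i l j * (uh j i - s i)\<bar>
          \<le> \<bar>pic n c d C i l\<bar> * (\<bar>uL i - uh j i\<bar> + \<bar>uU i - uh j i\<bar> + \<bar>uh j i - s i\<bar>)"
        by (rule mult_left_mono) simp
      have "pic n c d C i l * ((uL i - uh j i) * q i l j + (uU i - uh j i) * r i l j + Psum p i l j * (uh j i - s i))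
          \<le> \<bar>pic n c d C i l\<bar> * \<bar>(uL i - uh j i) * q i l j + (uU i - uh j i) * r i l j + Psum p i l j * (uh j i - s i)\<bar>"
        unfolding abs_mult[symmetric] by (rule abs_ge_self)
      from this h show "pic n c d C i l * ((uL i - uh j i) * q i l j + (uU i - uh j i) * r i l j + Psum p i l j * (uh j i - s i))
          \<le> \<bar>pic n c d C i l\<bar> * (\<bar>uL i - uh j i\<bar> + \<bar>uU i - uh j i\<bar> + \<bar>uh j i - s i\<bar>)" by (rule order_trans)
    qed simp
    thus "x \<le> B" by (simp add: B_def)
  qed
qed

context ubW begin

interpretation W: prob_space W by (rule Wp)

definition pA :: "nat \<Rightarrow> nat \<Rightarrow> nat \<Rightarrow> real" where
  "pA k l j = real N * (\<integral>x. om j x * of_bool (L x k = l \<and> L x (k-1) \<noteq> l) \<partial>W)"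
definition aA :: "nat \<Rightarrow> nat \<Rightarrow> nat \<Rightarrow> real" where
  "aA i l j = real N * (\<integral>x. om j x * of_bool (L x i = l) \<partial>W)"
definition DA :: "nat \<Rightarrow> nat \<Rightarrow> nat \<Rightarrow> real" where
  "DA i l j = real N * (\<integral>x. om j x * of_bool (L x i = l) * (fst x i - uh j i) \<partial>W)"
definition qA :: "nat \<Rightarrow> nat \<Rightarrow> nat \<Rightarrow> real" where
  "qA i l j = max (- DA i l j) 0 / (uh j i - uL i)"
definition rA :: "nat \<Rightarrow> nat \<Rightarrow> nat \<Rightarrow> real" where
  "rA i l j = max (DA i l j) 0 / (uU i - uh j i)"
definition cst :: "(nat \<Rightarrow> real) \<times> (nat \<Rightarrow> real) \<Rightarrow> real" where
  "cst x = (\<Sum>i=1..n. \<bar>fst x i - snd x i\<bar>)"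

lemma int_b1: "j \<in> {1..N} \<Longrightarrow> integrable W (\<lambda>x. om j x * of_bool (L x i = l))"
  using int_b[of j "\<lambda>a b. a = l" i i] by simp

lemma int_b2: "j \<in> {1..N} \<Longrightarrow> integrable W (\<lambda>x. om j x * of_bool (L x k = l \<and> L x (k-1) \<noteq> l))"
  using int_b[of j "\<lambda>a b. a = l \<and> b \<noteq> l" k "k-1"] by simp

lemma int_bf1: "j \<in> {1..N} \<Longrightarrow> i \<in> {1..n} \<Longrightarrow> integrable W (\<lambda>x. om j x * of_bool (L x i' = l) * (fst x i - a))"
  using int_bf[of j i "\<lambda>a b. a = l" i' i' a] by simp

lemma int_bd1: "j \<in> {1..N} \<Longrightarrow> i \<in> {1..n} \<Longrightarrow> integrable W (\<lambda>x. om j x * of_bool (L x i' = l) * \<bar>fst x i - snd x i\<bar>)"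
  using int_bd[of j i "\<lambda>a b. a = l" i' i'] by simp

lemma Psum_pA:
  assumes j: "j \<in> {1..N}" and i: "i \<in> {1..n}" and l: "l \<in> {i..n+1}"
  shows "Psum pA i l j = aA i l j"
proof -
  have "Psum pA i l j = real N * (\<Sum>k=1..i. \<integral>x. om j x * of_bool (L x k = l \<and> L x (k-1) \<noteq> l) \<partial>W)"
    unfolding Psum_def pA_def by (simp add: sum_distrib_left)
  also have "(\<Sum>k=1..i. \<integral>x. om j x * of_bool (L x k = l \<and> L x (k-1) \<noteq> l) \<partial>W)
      = (\<integral>x. (\<Sum>k=1..i. om j x * of_bool (L x k = l \<and> L x (k-1) \<noteq> l)) \<partial>W)"
    by (rule Bochner_Integration.integral_sum[symmetric], rule int_b2[OF j])
  also have "\<dots> = (\<integral>x. om j x * of_bool (L x i = l) \<partial>W)"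
  proof (intro Bochner_Integration.integral_cong refl)
    fix x
    have "(\<Sum>k=1..i. om j x * of_bool (L x k = l \<and> L x (k-1) \<noteq> l)) =
        om j x * (\<Sum>k=1..i. of_bool (L x k = l \<and> L x (k-1) \<noteq> l))"
      by (simp add: sum_distrib_left)
    also have "(\<Sum>k=1..i. of_bool (L x k = l \<and> L x (k-1) \<noteq> l) :: real) = of_bool (L x i = l)"
      unfolding L_def by (rule lg_telescope) (use i l in auto)
    finally show "(\<Sum>k=1..i. om j x * of_bool (L x k = l \<and> L x (k-1) \<noteq> l)) = om j x * of_bool (L x i = l)" .
  qed
  finally show ?thesis by (simp add: aA_def)
qed

lemma sum_aA:
  assumes j: "j \<in> {1..N}" and i: "i \<in> {1..n}"
  shows "(\<Sum>l=i..n+1. aA i l j) = 1"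
proof -
  have "(\<Sum>l=i..n+1. aA i l j) = real N * (\<Sum>l=i..n+1. \<integral>x. om j x * of_bool (L x i = l) \<partial>W)"
    by (simp only: aA_def sum_distrib_left)
  also have "(\<Sum>l=i..n+1. \<integral>x. om j x * of_bool (L x i = l) \<partial>W) = (\<integral>x. (\<Sum>l=i..n+1. om j x * of_bool (L x i = l)) \<partial>W)"
    by (rule Bochner_Integration.integral_sum[symmetric], rule int_b1[OF j])
  also have "\<dots> = integral\<^sup>L W (om j)"
  proof (intro Bochner_Integration.integral_cong refl)
    fix x
    have "(\<Sum>l=i..n+1. om j x * of_bool (L x i = l)) = (\<Sum>l=i..n+1. of_bool (L x i = l) * om j x)"
      by (simp add: mult.commute)
    also have "\<dots> = om j x" unfolding L_def by (rule lg_onehot[OF i])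
    finally show "(\<Sum>l=i..n+1. om j x * of_bool (L x i = l)) = om j x" .
  qed
  also have "\<dots> = 1 / real N" by (rule om_int[OF j])
  finally show ?thesis using N1 by simp
qed

lemma pA_nonneg: "pA k l j \<ge> 0"
  unfolding pA_def by (intro mult_nonneg_nonneg integral_nonneg_AE) (auto intro!: AE_I2 simp: om_nonneg)

lemma aA_nonneg: "aA i l j \<ge> 0"
  unfolding aA_def by (intro mult_nonneg_nonneg integral_nonneg_AE) (auto intro!: AE_I2 simp: om_nonneg)

lemma DA_bounds:
  assumes j: "j \<in> {1..N}" and i: "i \<in> {1..n}"
  shows "DA i l j \<le> aA i l j * (uU i - uh j i)" "- DA i l j \<le> aA i l j * (uh j i - uL i)"
proof -
  have e1: "(\<integral>x. om j x * of_bool (L x i = l) * (uU i - uh j i) \<partial>W) = (\<integral>x. om j x * of_bool (L x i = l) \<partial>W) * (uU i - uh j i)"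
    by (rule integral_mult_left_zero)
  have "(\<integral>x. om j x * of_bool (L x i = l) * (fst x i - uh j i) \<partial>W) \<le> (\<integral>x. om j x * of_bool (L x i = l) * (uU i - uh j i) \<partial>W)"
  proof (rule integral_mono_AE)
    show "integrable W (\<lambda>x. om j x * of_bool (L x i = l) * (fst x i - uh j i))" by (rule int_bf1[OF j i])
    show "integrable W (\<lambda>x. om j x * of_bool (L x i = l) * (uU i - uh j i))"
      by (rule integrable_mult_left, rule int_b1[OF j])
    show "AE x in W. om j x * of_bool (L x i = l) * (fst x i - uh j i) \<le> om j x * of_bool (L x i = l) * (uU i - uh j i)"
      using AEU_i
    proof eventually_elim
      case (elim x)
      have "fst x i \<le> uU i" using elim i by blast
      thus ?case by (intro mult_left_mono) (auto simp: om_nonneg)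
    qed
  qed
  thus "DA i l j \<le> aA i l j * (uU i - uh j i)" unfolding DA_def aA_def e1 using N1 by (simp add: mult.assoc)
  have e2: "(\<integral>x. om j x * of_bool (L x i = l) * (uh j i - uL i) \<partial>W) = (\<integral>x. om j x * of_bool (L x i = l) \<partial>W) * (uh j i - uL i)"
    by (rule integral_mult_left_zero)
  have "(\<integral>x. om j x * of_bool (L x i = l) * (uh j i - uL i) \<partial>W) \<ge> - (\<integral>x. om j x * of_bool (L x i = l) * (fst x i - uh j i) \<partial>W)"
  proof -
    have "(\<integral>x. om j x * of_bool (L x i = l) * (uh j i - uL i) \<partial>W) \<ge> (\<integral>x. - (om j x * of_bool (L x i = l) * (fst x i - uh j i)) \<partial>W)"
    proof (rule integral_mono_AE)
      show "integrable W (\<lambda>x. - (om j x * of_bool (L x i = l) * (fst x i - uh j i)))"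
        by (rule integrable_minus, rule int_bf1[OF j i])
      show "integrable W (\<lambda>x. om j x * of_bool (L x i = l) * (uh j i - uL i))"
        by (rule integrable_mult_left, rule int_b1[OF j])
      show "AE x in W. - (om j x * of_bool (L x i = l) * (fst x i - uh j i)) \<le> om j x * of_bool (L x i = l) * (uh j i - uL i)"
        using AEU_i
      proof eventually_elim
        case (elim x)
        have "uL i \<le> fst x i" using elim i by blast
        hence "om j x * of_bool (L x i = l) * (uh j i - fst x i) \<le> om j x * of_bool (L x i = l) * (uh j i - uL i)"
          by (intro mult_left_mono) (auto simp: om_nonneg)
        thus ?case by (simp add: algebra_simps)
      qed
    qed
    thus ?thesis by simp
  qed
  hence H: "- (\<integral>x. om j x * of_bool (L x i = l) * (fst x i - uh j i) \<partial>W) \<le> (\<integral>x. om j x * of_bool (L x i = l) * (uh j i - uL i) \<partial>W)" .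
  have "- DA i l j = real N * (- (\<integral>x. om j x * of_bool (L x i = l) * (fst x i - uh j i) \<partial>W))"
    by (simp add: DA_def)
  also have "\<dots> \<le> real N * (\<integral>x. om j x * of_bool (L x i = l) * (uh j i - uL i) \<partial>W)"
    by (rule mult_left_mono[OF H]) simp
  also have "\<dots> = aA i l j * (uh j i - uL i)" unfolding e2 aA_def by simp
  finally show "- DA i l j \<le> aA i l j * (uh j i - uL i)" .
qed

lemma DA_abs:
  assumes j: "j \<in> {1..N}" and i: "i \<in> {1..n}"
  shows "\<bar>DA i l j\<bar> \<le> real N * (\<integral>x. om j x * of_bool (L x i = l) * \<bar>fst x i - snd x i\<bar> \<partial>W)"
proof -
  have "\<bar>\<integral>x. om j x * of_bool (L x i = l) * (fst x i - uh j i) \<partial>W\<bar> \<le> (\<integral>x. \<bar>om j x * of_bool (L x i = l) * (fst x i - uh j i)\<bar> \<partial>W)"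
    by (rule integral_abs_bound)
  also have "\<dots> = (\<integral>x. om j x * of_bool (L x i = l) * \<bar>fst x i - snd x i\<bar> \<partial>W)"
  proof (intro Bochner_Integration.integral_cong refl)
    fix x
    show "\<bar>om j x * of_bool (L x i = l) * (fst x i - uh j i)\<bar> = om j x * of_bool (L x i = l) * \<bar>fst x i - snd x i\<bar>"
    proof (cases "om j x = 0")
      case False
      hence "snd x i = uh j i" using om_snd i by blast
      thus ?thesis by (simp add: abs_mult om_nonneg)
    qed simp
  qed
  finally have h: "\<bar>\<integral>x. om j x * of_bool (L x i = l) * (fst x i - uh j i) \<partial>W\<bar> \<le> (\<integral>x. om j x * of_bool (L x i = l) * \<bar>fst x i - snd x i\<bar> \<partial>W)" .
  have "\<bar>DA i l j\<bar> = real N * \<bar>\<integral>x. om j x * of_bool (L x i = l) * (fst x i - uh j i) \<partial>W\<bar>"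
    unfolding DA_def abs_mult by simp
  also have "\<dots> \<le> real N * (\<integral>x. om j x * of_bool (L x i = l) * \<bar>fst x i - snd x i\<bar> \<partial>W)"
    by (rule mult_left_mono[OF h]) simp
  finally show ?thesis .
qed

lemma qr_props:
  assumes j: "j \<in> {1..N}" and i: "i \<in> {1..n}"
  shows "qA i l j \<ge> 0" "rA i l j \<ge> 0"
    "(uL i - uh j i) * qA i l j + (uU i - uh j i) * rA i l j = DA i l j"
    "(uh j i - uL i) * qA i l j + (uU i - uh j i) * rA i l j \<le> \<bar>DA i l j\<bar>"
    "qA i l j + rA i l j \<le> aA i l j"
proof -
  have u: "uL i \<le> uh j i" "uh j i \<le> uU i" using uhU j i by auto
  have b1: "DA i l j \<le> aA i l j * (uU i - uh j i)" and b2: "- DA i l j \<le> aA i l j * (uh j i - uL i)"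
    using DA_bounds[OF j i] by auto
  have a0: "aA i l j \<ge> 0" by (rule aA_nonneg)
  show q0: "qA i l j \<ge> 0" unfolding qA_def using u by (intro divide_nonneg_nonneg) auto
  show r0: "rA i l j \<ge> 0" unfolding rA_def using u by (intro divide_nonneg_nonneg) auto
  have rr: "(uU i - uh j i) * rA i l j = max (DA i l j) 0"
  proof (cases "uU i = uh j i")
    case True thus ?thesis using b1 by (simp add: rA_def)
  next
    case False thus ?thesis using u by (simp add: rA_def)
  qed
  have qq: "(uh j i - uL i) * qA i l j = max (- DA i l j) 0"
  proof (cases "uh j i = uL i")
    case True thus ?thesis using b2 by (simp add: qA_def)
  next
    case False thus ?thesis using u by (simp add: qA_def)
  qed
  show "(uL i - uh j i) * qA i l j + (uU i - uh j i) * rA i l j = DA i l j"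
  proof -
    have "(uL i - uh j i) * qA i l j = - ((uh j i - uL i) * qA i l j)" by (simp add: algebra_simps)
    thus ?thesis using rr qq by linarith
  qed
  show "(uh j i - uL i) * qA i l j + (uU i - uh j i) * rA i l j \<le> \<bar>DA i l j\<bar>"
    using rr qq by simp
  show "qA i l j + rA i l j \<le> aA i l j"
  proof (cases "DA i l j \<ge> 0")
    case True
    hence q: "qA i l j = 0" by (simp add: qA_def)
    have "rA i l j \<le> aA i l j"
    proof (cases "uU i = uh j i")
      case True thus ?thesis using a0 by (simp add: rA_def)
    next
      case False
      hence pos: "uU i - uh j i > 0" using u by simp
      have "rA i l j = DA i l j / (uU i - uh j i)" using \<open>DA i l j \<ge> 0\<close> by (simp add: rA_def)
      also have "\<dots> \<le> aA i l j" using b1 pos by (simp add: divide_le_eq)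
      finally show ?thesis .
    qed
    thus ?thesis using q by simp
  next
    case False
    hence r: "rA i l j = 0" by (simp add: rA_def)
    have "qA i l j \<le> aA i l j"
    proof (cases "uh j i = uL i")
      case True thus ?thesis using a0 by (simp add: qA_def)
    next
      case False
      hence pos: "uh j i - uL i > 0" using u by simp
      have "qA i l j = - DA i l j / (uh j i - uL i)" using \<open>\<not> DA i l j \<ge> 0\<close> by (simp add: qA_def)
      also have "\<dots> \<le> aA i l j" using b2 pos by (subst divide_le_eq) auto
      finally show ?thesis .
    qed
    thus ?thesis using r by simp
  qed
qed

end


context ubW begin

interpretation W: prob_space W by (rule Wp)

lemma cst_meas: "cst \<in> borel_measurable W"
  unfolding cst_def using fst_meas snd_meas
  by (intro borel_measurable_sum borel_measurable_abs borel_measurable_diff) auto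

lemma cost_sum:
  "(\<Sum>j=1..N. \<Sum>i=1..n. \<Sum>l=i..n+1. \<integral>x. om j x * of_bool (L x i = l) * \<bar>fst x i - snd x i\<bar> \<partial>W) = integral\<^sup>L W cst"
proof -
  have "(\<Sum>j=1..N. \<Sum>i=1..n. \<Sum>l=i..n+1. \<integral>x. om j x * of_bool (L x i = l) * (\<lambda>i l x. \<bar>fst x i - snd x i\<bar>) i l x \<partial>W)
     = (\<integral>x. (\<Sum>i=1..n. (\<lambda>i l x. \<bar>fst x i - snd x i\<bar>) i (L x i) x) \<partial>W)"
  proof (rule swap_sum)
    fix j i l assume "j \<in> {1..N}" "i \<in> {1..n}"
    thus "integrable W (\<lambda>x. om j x * of_bool (L x i = l) * \<bar>fst x i - snd x i\<bar>)" by (rule int_bd1)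
  next
    show "(\<lambda>x. \<Sum>i=1..n. \<bar>fst x i - snd x i\<bar>) \<in> borel_measurable W"
      using fst_meas snd_meas by (intro borel_measurable_sum borel_measurable_abs borel_measurable_diff) auto
  qed
  thus ?thesis by (simp only: cst_def[abs_def])
qed

lemma obj_sum:
  "(\<integral>x. fval n c d C s (fst x) \<partial>W) = (1 / real N) * (\<Sum>j=1..N. \<Sum>i=1..n. \<Sum>l=i..n+1.
      pic n c d C i l * (DA i l j + aA i l j * (uh j i - s i)))"
proof -
  have step: "pic n c d C i l * (DA i l j + aA i l j * (uh j i - s i)) =
      real N * (\<integral>x. om j x * of_bool (L x i = l) * (pic n c d C i l * (fst x i - s i)) \<partial>W)"
    if j: "j \<in> {1..N}" and i: "i \<in> {1..n}" for j i l
  proof -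
    have "DA i l j + aA i l j * (uh j i - s i) = real N * ((\<integral>x. om j x * of_bool (L x i = l) * (fst x i - uh j i) \<partial>W)
        + (\<integral>x. om j x * of_bool (L x i = l) * (uh j i - s i) \<partial>W))"
    proof -
      have "(\<integral>x. om j x * of_bool (L x i = l) * (uh j i - s i) \<partial>W) = (\<integral>x. om j x * of_bool (L x i = l) \<partial>W) * (uh j i - s i)"
        by (rule integral_mult_left_zero)
      thus ?thesis unfolding DA_def aA_def by (simp only: distrib_left mult.assoc)
    qed
    also have "(\<integral>x. om j x * of_bool (L x i = l) * (fst x i - uh j i) \<partial>W)
        + (\<integral>x. om j x * of_bool (L x i = l) * (uh j i - s i) \<partial>W)
        = (\<integral>x. om j x * of_bool (L x i = l) * (fst x i - uh j i) + om j x * of_bool (L x i = l) * (uh j i - s i) \<partial>W)"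
      by (rule Bochner_Integration.integral_add[symmetric], rule int_bf1[OF j i],
          rule integrable_mult_left, rule int_b1[OF j])
    also have "\<dots> = (\<integral>x. om j x * of_bool (L x i = l) * (fst x i - s i) \<partial>W)"
      by (intro Bochner_Integration.integral_cong refl) (simp add: algebra_simps)
    finally have "pic n c d C i l * (DA i l j + aA i l j * (uh j i - s i)) =
       real N * (pic n c d C i l * (\<integral>x. om j x * of_bool (L x i = l) * (fst x i - s i) \<partial>W))"
      by simp
    also have "pic n c d C i l * (\<integral>x. om j x * of_bool (L x i = l) * (fst x i - s i) \<partial>W) =
        (\<integral>x. om j x * of_bool (L x i = l) * (pic n c d C i l * (fst x i - s i)) \<partial>W)"
      by (subst integral_mult_right_zero[symmetric]) (simp add: algebra_simps)
    finally show ?thesis .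
  qed
  have "(1 / real N) * (\<Sum>j=1..N. \<Sum>i=1..n. \<Sum>l=i..n+1. pic n c d C i l * (DA i l j + aA i l j * (uh j i - s i)))
     = (1 / real N) * (\<Sum>j=1..N. \<Sum>i=1..n. \<Sum>l=i..n+1.
          real N * (\<integral>x. om j x * of_bool (L x i = l) * (pic n c d C i l * (fst x i - s i)) \<partial>W))"
    using step by (intro arg_cong[where f="\<lambda>t. (1 / real N) * t"] sum.cong refl) auto
  also have "\<dots> = (\<Sum>j=1..N. \<Sum>i=1..n. \<Sum>l=i..n+1.
          (\<integral>x. om j x * of_bool (L x i = l) * (pic n c d C i l * (fst x i - s i)) \<partial>W))"
    using N1 by (simp only: sum_distrib_left mult.assoc[symmetric]) simp
  also have "\<dots> = (\<integral>x. (\<Sum>i=1..n. pic n c d C i (L x i) * (fst x i - s i)) \<partial>W)"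
  proof (rule swap_sum)
    fix j i l assume j: "j \<in> {1..N}" and i: "i \<in> {1..n}"
    have "integrable W (\<lambda>x. pic n c d C i l * (om j x * of_bool (L x i = l) * (fst x i - s i)))"
      by (rule integrable_mult_right, rule int_bf1[OF j i])
    thus "integrable W (\<lambda>x. om j x * of_bool (L x i = l) * (pic n c d C i l * (fst x i - s i)))"
      by (simp add: algebra_simps)
  next
    show "(\<lambda>x. \<Sum>i=1..n. pic n c d C i (L x i) * (fst x i - s i)) \<in> borel_measurable W"
      using L_fun_meas fst_meas by (intro borel_measurable_sum borel_measurable_times borel_measurable_diff) auto
  qed
  also have "\<dots> = (\<integral>x. fval n c d C s (fst x) \<partial>W)"
    using fval_props(1)[OF cnn dnn Cnn dc n1] by (intro Bochner_Integration.integral_cong refl) (simp add: L_def)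
  finally show ?thesis ..
qed

lemma ub_step:
  assumes th0: "0 \<le> \<theta>" and th1: "\<theta> \<le> 1" and thT: "\<theta> * integral\<^sup>L W cst \<le> eps"
  shows "(\<integral>x. fval n c d C s (fst x) \<partial>W) \<le> LP_val n N c d C uL uU uh s eps
      + (\<Sum>i=1..n. \<Sum>l=i..n+1. \<bar>pic n c d C i l\<bar>) * ((1 - \<theta>) * integral\<^sup>L W cst)"
proof -
  define TT where "TT = integral\<^sup>L W cst"
  define Mp where "Mp = (\<Sum>i=1..n. \<Sum>l=i..n+1. \<bar>pic n c d C i l\<bar>)"
  define q' where "q' i l j = \<theta> * qA i l j" for i l j
  define r' where "r' i l j = \<theta> * rA i l j" for i l j
  have Npos: "real N > 0" using N1 by simp
  have picM: "\<bar>pic n c d C i l\<bar> \<le> Mp" if i: "i \<in> {1..n}" and l: "l \<in> {i..n+1}" for i l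
  proof -
    have "\<bar>pic n c d C i l\<bar> \<le> (\<Sum>l'=i..n+1. \<bar>pic n c d C i l'\<bar>)"
      by (rule member_le_sum) (use l in auto)
    also have "\<dots> \<le> Mp" unfolding Mp_def
      by (rule member_le_sum[where f="\<lambda>i. \<Sum>l'=i..n+1. \<bar>pic n c d C i l'\<bar>"]) (use i in \<open>auto intro: sum_nonneg\<close>)
    finally show ?thesis .
  qed
  have S3abs: "(\<Sum>j=1..N. \<Sum>i=1..n. \<Sum>l=i..n+1. \<bar>DA i l j\<bar>) \<le> real N * TT"
  proof -
    have "(\<Sum>j=1..N. \<Sum>i=1..n. \<Sum>l=i..n+1. \<bar>DA i l j\<bar>) \<le>
       (\<Sum>j=1..N. \<Sum>i=1..n. \<Sum>l=i..n+1. real N * (\<integral>x. om j x * of_bool (L x i = l) * \<bar>fst x i - snd x i\<bar> \<partial>W))"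
      using DA_abs by (intro sum_mono) auto
    also have "\<dots> = real N * (\<Sum>j=1..N. \<Sum>i=1..n. \<Sum>l=i..n+1. (\<integral>x. om j x * of_bool (L x i = l) * \<bar>fst x i - snd x i\<bar> \<partial>W))"
      by (simp only: sum_distrib_left)
    also have "\<dots> = real N * TT" unfolding TT_def cost_sum ..
    finally show ?thesis .
  qed
  have TT0: "TT \<ge> 0" unfolding TT_def cst_def by (intro integral_nonneg_AE) (auto intro!: AE_I2 sum_nonneg)
  have feas: "LP_feasible n N uL uU uh eps pA q' r'"
    unfolding LP_feasible_def
  proof (intro conjI ballI)
    have "(\<Sum>j=1..N. \<Sum>i=1..n. \<Sum>l=i..n+1. (uh j i - uL i) * q' i l j + (uU i - uh j i) * r' i l j)
        \<le> (\<Sum>j=1..N. \<Sum>i=1..n. \<Sum>l=i..n+1. \<theta> * \<bar>DA i l j\<bar>)"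
    proof (intro sum_mono)
      fix j i l assume j: "j \<in> {1..N}" and i: "i \<in> {1..n}" and l: "l \<in> {i..n+1}"
      have "\<theta> * ((uh j i - uL i) * qA i l j + (uU i - uh j i) * rA i l j) \<le> \<theta> * \<bar>DA i l j\<bar>"
        by (rule mult_left_mono[OF qr_props(4)[OF j i] th0])
      thus "(uh j i - uL i) * q' i l j + (uU i - uh j i) * r' i l j \<le> \<theta> * \<bar>DA i l j\<bar>"
        by (simp add: q'_def r'_def algebra_simps)
    qed
    also have "\<dots> = \<theta> * (\<Sum>j=1..N. \<Sum>i=1..n. \<Sum>l=i..n+1. \<bar>DA i l j\<bar>)" by (simp only: sum_distrib_left)
    also have "\<dots> \<le> \<theta> * (real N * TT)" by (rule mult_left_mono[OF S3abs th0])
    finally have "(\<Sum>j=1..N. \<Sum>i=1..n. \<Sum>l=i..n+1. (uh j i - uL i) * q' i l j + (uU i - uh j i) * r' i l j)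
        \<le> real N * (\<theta> * TT)" by (simp add: algebra_simps)
    hence "(1 / real N) * (\<Sum>j=1..N. \<Sum>i=1..n. \<Sum>l=i..n+1. (uh j i - uL i) * q' i l j + (uU i - uh j i) * r' i l j)
        \<le> \<theta> * TT" using Npos by (simp add: divide_le_eq mult.commute)
    thus "(1 / real N) * (\<Sum>j=1..N. \<Sum>i=1..n. \<Sum>l=i..n+1. (uh j i - uL i) * q' i l j + (uU i - uh j i) * r' i l j)
        \<le> eps" using thT unfolding TT_def by linarith
  next
    fix i j assume i: "i \<in> {1..n}" and j: "j \<in> {1..N}"
    have "(\<Sum>l=i..n+1. Psum pA i l j) = (\<Sum>l=i..n+1. aA i l j)"
      using Psum_pA[OF j i] by (intro sum.cong refl) auto
    thus "(\<Sum>l=i..n+1. Psum pA i l j) = 1" using sum_aA[OF j i] by simp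
  next
    fix i l j assume i: "i \<in> {1..n}" and l: "l \<in> {i..n+1}" and j: "j \<in> {1..N}"
    have "\<theta> * (qA i l j + rA i l j) \<le> 1 * (qA i l j + rA i l j)"
      using qr_props(1,2)[OF j i, of l] th1 by (intro mult_right_mono) auto
    thus "Psum pA i l j - q' i l j - r' i l j \<ge> 0"
      using Psum_pA[OF j i l] qr_props(5)[OF j i, of l] by (simp add: q'_def r'_def algebra_simps)
  next
    fix i l j assume i: "i \<in> {1..n}" and l: "l \<in> {i..n+1}" and j: "j \<in> {1..N}"
    show "pA i l j \<ge> 0" by (rule pA_nonneg)
  next
    fix i l j assume i: "i \<in> {1..n}" and l: "l \<in> {i..n+1}" and j: "j \<in> {1..N}"
    show "q' i l j \<ge> 0" using qr_props(1)[OF j i, of l] th0 by (simp add: q'_def)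
  next
    fix i l j assume i: "i \<in> {1..n}" and l: "l \<in> {i..n+1}" and j: "j \<in> {1..N}"
    show "r' i l j \<ge> 0" using qr_props(2)[OF j i, of l] th0 by (simp add: r'_def)
  qed
  have objeq: "LP_obj n N c d C uL uU uh s pA q' r' = (1 / real N) *
      (\<Sum>j=1..N. \<Sum>i=1..n. \<Sum>l=i..n+1. pic n c d C i l * (\<theta> * DA i l j + aA i l j * (uh j i - s i)))"
    unfolding LP_obj_def
  proof (intro arg_cong[where f="\<lambda>t. (1 / real N) * t"] sum.cong refl)
    fix j i l assume j: "j \<in> {1..N}" and i: "i \<in> {1..n}" and l: "l \<in> {i..n+1}"
    have "(uL i - uh j i) * q' i l j + (uU i - uh j i) * r' i l j = \<theta> * ((uL i - uh j i) * qA i l j + (uU i - uh j i) * rA i l j)"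
      by (simp add: q'_def r'_def algebra_simps)
    also have "\<dots> = \<theta> * DA i l j" using qr_props(3)[OF j i] by simp
    finally show "pic n c d C i l * ((uL i - uh j i) * q' i l j + (uU i - uh j i) * r' i l j + Psum pA i l j * (uh j i - s i))
       = pic n c d C i l * (\<theta> * DA i l j + aA i l j * (uh j i - s i))"
      using Psum_pA[OF j i l] by simp
  qed
  have rest: "(\<Sum>j=1..N. \<Sum>i=1..n. \<Sum>l=i..n+1. pic n c d C i l * ((1 - \<theta>) * DA i l j)) \<le> Mp * ((1 - \<theta>) * (real N * TT))"
  proof -
    have "(\<Sum>j=1..N. \<Sum>i=1..n. \<Sum>l=i..n+1. pic n c d C i l * ((1 - \<theta>) * DA i l j))
        \<le> (\<Sum>j=1..N. \<Sum>i=1..n. \<Sum>l=i..n+1. Mp * ((1 - \<theta>) * \<bar>DA i l j\<bar>))"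
    proof (intro sum_mono)
      fix j i l assume j: "j \<in> {1..N}" and i: "i \<in> {1..n}" and l: "l \<in> {i..n+1}"
      have "pic n c d C i l * ((1 - \<theta>) * DA i l j) \<le> \<bar>pic n c d C i l\<bar> * ((1 - \<theta>) * \<bar>DA i l j\<bar>)"
      proof -
        have "\<bar>pic n c d C i l * ((1 - \<theta>) * DA i l j)\<bar> = \<bar>pic n c d C i l\<bar> * ((1 - \<theta>) * \<bar>DA i l j\<bar>)"
          using th1 by (simp add: abs_mult)
        thus ?thesis by (metis abs_ge_self)
      qed
      also have "\<dots> \<le> Mp * ((1 - \<theta>) * \<bar>DA i l j\<bar>)"
        by (rule mult_right_mono[OF picM[OF i l]]) (use th1 in simp)
      finally show "pic n c d C i l * ((1 - \<theta>) * DA i l j) \<le> Mp * ((1 - \<theta>) * \<bar>DA i l j\<bar>)" .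
    qed
    also have "\<dots> = Mp * ((1 - \<theta>) * (\<Sum>j=1..N. \<Sum>i=1..n. \<Sum>l=i..n+1. \<bar>DA i l j\<bar>))"
      by (simp only: sum_distrib_left)
    also have "\<dots> \<le> Mp * ((1 - \<theta>) * (real N * TT))"
    proof (rule mult_left_mono)
      show "(1 - \<theta>) * (\<Sum>j=1..N. \<Sum>i=1..n. \<Sum>l=i..n+1. \<bar>DA i l j\<bar>) \<le> (1 - \<theta>) * (real N * TT)"
        by (rule mult_left_mono[OF S3abs]) (use th1 in simp)
      show "0 \<le> Mp" unfolding Mp_def by (intro sum_nonneg) auto
    qed
    finally show ?thesis .
  qed
  have "(\<integral>x. fval n c d C s (fst x) \<partial>W) = (1 / real N) *
      (\<Sum>j=1..N. \<Sum>i=1..n. \<Sum>l=i..n+1. pic n c d C i l * (DA i l j + aA i l j * (uh j i - s i)))"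
    by (rule obj_sum)
  also have "(\<Sum>j=1..N. \<Sum>i=1..n. \<Sum>l=i..n+1. pic n c d C i l * (DA i l j + aA i l j * (uh j i - s i))) =
      (\<Sum>j=1..N. \<Sum>i=1..n. \<Sum>l=i..n+1. pic n c d C i l * (\<theta> * DA i l j + aA i l j * (uh j i - s i))
         + pic n c d C i l * ((1 - \<theta>) * DA i l j))"
    by (intro sum.cong refl) (simp add: algebra_simps)
  also have "\<dots> = (\<Sum>j=1..N. \<Sum>i=1..n. \<Sum>l=i..n+1. pic n c d C i l * (\<theta> * DA i l j + aA i l j * (uh j i - s i)))
      + (\<Sum>j=1..N. \<Sum>i=1..n. \<Sum>l=i..n+1. pic n c d C i l * ((1 - \<theta>) * DA i l j))"
    by (simp only: sum.distrib)
  also have "(1 / real N) * \<dots> = LP_obj n N c d C uL uU uh s pA q' r'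
      + (1 / real N) * (\<Sum>j=1..N. \<Sum>i=1..n. \<Sum>l=i..n+1. pic n c d C i l * ((1 - \<theta>) * DA i l j))"
    unfolding objeq by (simp add: distrib_left)
  also have "\<dots> \<le> LP_val n N c d C uL uU uh s eps + Mp * ((1 - \<theta>) * TT)"
  proof (rule add_mono)
    show "LP_obj n N c d C uL uU uh s pA q' r' \<le> LP_val n N c d C uL uU uh s eps"
      unfolding LP_val_def by (rule cSup_upper[OF _ LP_bdd]) (use feas in blast)
    have "(1 / real N) * (\<Sum>j=1..N. \<Sum>i=1..n. \<Sum>l=i..n+1. pic n c d C i l * ((1 - \<theta>) * DA i l j))
       \<le> (1 / real N) * (Mp * ((1 - \<theta>) * (real N * TT)))"
      by (rule mult_left_mono[OF rest]) simp
    also have "\<dots> = Mp * ((1 - \<theta>) * TT)" using Npos by simp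
    finally show "(1 / real N) * (\<Sum>j=1..N. \<Sum>i=1..n. \<Sum>l=i..n+1. pic n c d C i l * ((1 - \<theta>) * DA i l j))
       \<le> Mp * ((1 - \<theta>) * TT)" .
  qed
  finally show ?thesis unfolding Mp_def TT_def .
qed

end


lemma singleton_sets: "v \<in> space (Mn n) \<Longrightarrow> {v} \<in> sets (Mn n)"
proof -
  assume v: "v \<in> space (Mn n)"
  have "{v} = PiE {1..n} (\<lambda>i. {v i})"
    by (rule PiE_singleton[symmetric]) (use v in \<open>simp add: space_Mn PiE_iff\<close>)
  also have "\<dots> \<in> sets (Mn n)" unfolding Mn_def by (intro sets_PiM_I_finite) auto
  finally show ?thesis .
qed

lemma ub_global:
  fixes n N :: nat and C eps :: real
    and c d uL uU s :: "nat \<Rightarrow> real" and uh :: "nat \<Rightarrow> nat \<Rightarrow> real"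
  assumes n: "n \<ge> 1" and N: "N \<ge> 1"
    and c: "\<forall>i\<in>{1..n}. c i \<ge> 0" and d: "\<forall>i\<in>{1..n}. d i \<ge> 0" and C: "C \<ge> 0"
    and dc: "\<forall>i\<in>{1..n-1}. d (i+1) - d i \<le> c (i+1)"
    and uhU: "\<forall>j\<in>{1..N}. \<forall>i\<in>{1..n}. uL i \<le> uh j i \<and> uh j i \<le> uU i"
    and eps: "eps \<ge> 0"
    and Q: "Q \<in> Dball n uL uU N uh eps"
  shows "(\<integral>u. fval n c d C s u \<partial>Q) \<le> LP_val n N c d C uL uU uh s eps"
proof (rule field_le_epsilon)
  fix e :: real assume e: "0 < e"
  define Mp where "Mp = (\<Sum>i=1..n. \<Sum>l=i..n+1. \<bar>pic n c d C i l\<bar>)"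
  have Mp0: "Mp \<ge> 0" unfolding Mp_def by (intro sum_nonneg) auto
  define \<delta> where "\<delta> = e / (Mp + 1)"
  have \<delta>0: "\<delta> > 0" using e Mp0 by (simp add: \<delta>_def)
  have Mpd: "Mp * \<delta> \<le> e"
  proof -
    have "Mp * \<delta> = e * (Mp / (Mp + 1))" by (simp add: \<delta>_def)
    also have "\<dots> \<le> e * 1" using e Mp0 by (intro mult_left_mono) auto
    finally show ?thesis by simp
  qed
  have Qp: "prob_space Q" and sQ: "sets Q = sets (Mn n)" and QU: "emeasure Q (Uset n uL uU) = 1"
    and Qw: "wass1 n Q (empirical n N uh) \<le> ennreal eps"
    using Q unfolding Dball_def by auto
  have "ennreal eps < ennreal (eps + \<delta>)" using \<delta>0 eps by (simp add: ennreal_lessI)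
  with Qw have "wass1 n Q (empirical n N uh) < ennreal (eps + \<delta>)" by (rule order.strict_trans1)
  then obtain W where cW: "coupling n Q (empirical n N uh) W"
    and cost: "(\<integral>\<^sup>+ x. ennreal (\<Sum>i=1..n. \<bar>fst x i - snd x i\<bar>) \<partial>W) < ennreal (eps + \<delta>)"
    unfolding wass1_def by (auto simp: INF_less_iff)
  have Wp: "prob_space W" and sW: "sets W = sets (Mn n \<Otimes>\<^sub>M Mn n)"
    and Wf: "distr W (Mn n) fst = Q" and Ws: "distr W (Mn n) snd = empirical n N uh"
    using cW unfolding coupling_def by auto
  interpret W: prob_space W by (rule Wp)
  have mfst: "fst \<in> measurable W (Mn n)" by (simp add: measurable_cong_sets[OF sW refl])
  have msnd: "snd \<in> measurable W (Mn n)" by (simp add: measurable_cong_sets[OF sW refl])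
  define ur where "ur j = restrict (uh j) {1..n}" for j
  have urs: "ur j \<in> space (Mn n)" for j by (simp add: ur_def space_Mn)
  have Esp: "set_pmf (map_pmf ur (pmf_of_set {1..N})) \<subseteq> space (Mn n)" using urs by auto
  have Edef: "empirical n N uh = distr (measure_pmf (map_pmf ur (pmf_of_set {1..N}))) (Mn n) (\<lambda>x. x)"
    by (simp add: empirical_def ur_def[abs_def])
  have AEU: "AE x in W. fst x \<in> Uset n uL uU"
  proof -
    have "emeasure W (fst -` Uset n uL uU \<inter> space W) = emeasure Q (Uset n uL uU)"
      unfolding Wf[symmetric] by (rule emeasure_distr[OF mfst Uset_sets, symmetric])
    hence "W.prob (fst -` Uset n uL uU \<inter> space W) = 1" using QU by (simp add: W.emeasure_eq_measure)
    hence "AE x in W. x \<in> fst -` Uset n uL uU \<inter> space W" by (rule W.AE_prob_1)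
    thus ?thesis by eventually_elim auto
  qed
  define V where "V = ur ` {1..N}"
  have Vsets: "V \<in> sets (Mn n)"
  proof -
    have "V = (\<Union>j\<in>{1..N}. {ur j})" by (auto simp: V_def)
    also have "\<dots> \<in> sets (Mn n)" using singleton_sets[OF urs] by (intro sets.finite_UN) auto
    finally show ?thesis .
  qed
  have AEV: "AE x in W. \<exists>j\<in>{1..N}. snd x = restrict (uh j) {1..n}"
  proof -
    have "emeasure W (snd -` V \<inter> space W) = emeasure (empirical n N uh) V"
      unfolding Ws[symmetric] by (rule emeasure_distr[OF msnd Vsets, symmetric])
    also have "\<dots> = emeasure (measure_pmf (map_pmf ur (pmf_of_set {1..N}))) V"
      unfolding Edef by (rule dpi_emeasure[OF Esp Vsets])
    also have "\<dots> = 1" using N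
      by (intro measure_pmf.emeasure_eq_1_AE) (auto simp: AE_measure_pmf_iff V_def)
    finally have "W.prob (snd -` V \<inter> space W) = 1" by (simp add: W.emeasure_eq_measure)
    hence "AE x in W. x \<in> snd -` V \<inter> space W" by (rule W.AE_prob_1)
    thus ?thesis by eventually_elim (auto simp: V_def ur_def)
  qed
  have Wsnd: "measure W {x\<in>space W. snd x = restrict (uh j) {1..n}} =
        real (card {j'\<in>{1..N}. restrict (uh j') {1..n} = restrict (uh j) {1..n}}) / real N" if j: "j \<in> {1..N}" for j
  proof -
    have e1: "{x\<in>space W. snd x = ur j} = snd -` {ur j} \<inter> space W" by auto
    have "emeasure W (snd -` {ur j} \<inter> space W) = emeasure (empirical n N uh) {ur j}"
      unfolding Ws[symmetric] by (rule emeasure_distr[OF msnd singleton_sets[OF urs], symmetric])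
    also have "\<dots> = emeasure (measure_pmf (map_pmf ur (pmf_of_set {1..N}))) {ur j}"
      unfolding Edef by (rule dpi_emeasure[OF Esp singleton_sets[OF urs]])
    finally have "W.prob (snd -` {ur j} \<inter> space W) = measure_pmf.prob (map_pmf ur (pmf_of_set {1..N})) {ur j}"
      by (simp add: W.emeasure_eq_measure measure_pmf.emeasure_eq_measure)
    also have "\<dots> = measure_pmf.prob (pmf_of_set {1..N}) (ur -` {ur j})" by simp
    also have "\<dots> = real (card ({1..N} \<inter> ur -` {ur j})) / real (card {1..N})"
      using N by (intro measure_pmf_of_set) auto
    also have "{1..N} \<inter> ur -` {ur j} = {j'\<in>{1..N}. ur j' = ur j}" by auto
    finally have h: "W.prob (snd -` {ur j} \<inter> space W) = real (card {j'\<in>{1..N}. ur j' = ur j}) / real (card {1..N})" .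
    have e2: "{x\<in>space W. snd x = restrict (uh j) {1..n}} = snd -` {ur j} \<inter> space W" by (auto simp: ur_def)
    show ?thesis unfolding e2 h unfolding ur_def by simp
  qed
  interpret ubW n N c d uL uU s C eps uh W
    by unfold_locales (use n N c d C dc uhU Wp sW AEU AEV Wsnd in auto)
  have cstint: "integrable W cst"
  proof (rule integrableI_bounded)
    show "cst \<in> borel_measurable W" by (rule cst_meas)
    have "(\<integral>\<^sup>+ x. ennreal (norm (cst x)) \<partial>W) = (\<integral>\<^sup>+ x. ennreal (\<Sum>i=1..n. \<bar>fst x i - snd x i\<bar>) \<partial>W)"
      by (intro nn_integral_cong) (simp add: cst_def sum_nonneg)
    also have "\<dots> < \<infinity>" using cost by (simp add: order.strict_trans)
    finally show "(\<integral>\<^sup>+ x. ennreal (norm (cst x)) \<partial>W) < \<infinity>" .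
  qed
  have "ennreal (integral\<^sup>L W cst) = (\<integral>\<^sup>+ x. ennreal (cst x) \<partial>W)"
    by (rule nn_integral_eq_integral[OF cstint, symmetric]) (auto simp: cst_def intro!: AE_I2 sum_nonneg)
  also have "\<dots> < ennreal (eps + \<delta>)" using cost by (simp add: cst_def)
  finally have TTlt: "integral\<^sup>L W cst < eps + \<delta>"
    by (subst (asm) ennreal_less_iff) (auto simp: cst_def intro!: integral_nonneg_AE AE_I2 sum_nonneg)
  have TT0: "integral\<^sup>L W cst \<ge> 0" by (auto simp: cst_def intro!: integral_nonneg_AE AE_I2 sum_nonneg)
  define TT where "TT = integral\<^sup>L W cst"
  define \<theta> where "\<theta> = (if TT \<le> eps then 1 else eps / TT)"
  have th0: "0 \<le> \<theta>" and th1: "\<theta> \<le> 1" and thT: "\<theta> * TT \<le> eps" and thd: "(1 - \<theta>) * TT \<le> \<delta>"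
    using TTlt TT0 eps \<delta>0 unfolding \<theta>_def TT_def[symmetric] by (auto simp: field_simps)
  have "(\<integral>u. fval n c d C s u \<partial>Q) = (\<integral>x. fval n c d C s (fst x) \<partial>W)"
    unfolding Wf[symmetric] by (rule integral_distr[OF mfst fval_meas[OF c d C dc n]])
  also have "\<dots> \<le> LP_val n N c d C uL uU uh s eps + Mp * ((1 - \<theta>) * TT)"
    using ub_step[OF th0 th1] thT unfolding Mp_def TT_def by simp
  also have "Mp * ((1 - \<theta>) * TT) \<le> Mp * \<delta>" by (rule mult_left_mono[OF thd Mp0])
  finally show "(\<integral>u. fval n c d C s u \<partial>Q) \<le> LP_val n N c d C uL uU uh s eps + e" using Mpd by linarith
qed


theorem theorem5:
  fixes n N :: nat and T C eps :: real
    and c d uL uU sbar :: "nat \<Rightarrow> real" and uh :: "nat \<Rightarrow> nat \<Rightarrow> real"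
  assumes "n \<ge> 1" and "N \<ge> 1" and "T > 0"
    and "\<forall>i\<in>{1..n}. c i \<ge> 0" and "\<forall>i\<in>{1..n}. d i \<ge> 0" and "C \<ge> 0"
    and "\<forall>i\<in>{1..n-1}. d (i+1) - d i \<le> c (i+1)"
    and "\<forall>i\<in>{1..n}. 0 \<le> uL i \<and> uL i < uU i"
    and "\<forall>j\<in>{1..N}. \<forall>i\<in>{1..n}. uL i \<le> uh j i \<and> uh j i \<le> uU i"
    and "\<forall>i\<in>{1..n}. sbar i \<ge> 0" and "(\<Sum>i=1..n. sbar i) \<le> T"
    and "eps \<ge> 0"
  shows "Sup ((\<lambda>Q. \<integral>u. fval n c d C sbar u \<partial>Q) ` Dball n uL uU N uh eps)
           = LP_val n N c d C uL uU uh sbar eps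
       \<and> (\<forall>p q r. LP_feasible n N uL uU uh eps p q r \<and>
              LP_obj n N c d C uL uU uh sbar p q r = LP_val n N c d C uL uU uh sbar eps \<longrightarrow>
            (\<forall>j\<in>{1..N}. \<exists>P :: (nat \<times> nat \<Rightarrow> nat) pmf. has_marginals n p j P) \<and>
            (\<forall>Pt. (\<forall>j\<in>{1..N}. has_marginals n p j (Pt j)) \<longrightarrow>
                 Qstar n N uL uU uh p q r Pt \<in> Dball n uL uU N uh eps \<and>
                 (\<integral>u. fval n c d C sbar u \<partial>(Qstar n N uL uU uh p q r Pt))
                   = Sup ((\<lambda>Q. \<integral>u. fval n c d C sbar u \<partial>Q) ` Dball n uL uU N uh eps)))"
proof -
  note a = assms
  have n: "n \<ge> 1" and N: "N \<ge> 1" and c: "\<forall>i\<in>{1..n}. c i \<ge> 0" and d: "\<forall>i\<in>{1..n}. d i \<ge> 0"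
    and C: "C \<ge> 0" and dc: "\<forall>i\<in>{1..n-1}. d (i+1) - d i \<le> c (i+1)"
    and uhU: "\<forall>j\<in>{1..N}. \<forall>i\<in>{1..n}. uL i \<le> uh j i \<and> uh j i \<le> uU i" and eps: "eps \<ge> 0"
    using assms by auto
  define F where "F = (\<lambda>Q. \<integral>u. fval n c d C sbar u \<partial>Q) ` Dball n uL uU N uh eps"
  define V where "V = LP_val n N c d C uL uU uh sbar eps"
  define S where "S = {LP_obj n N c d C uL uU uh sbar p q r | p q r. LP_feasible n N uL uU uh eps p q r}"
  have ub: "\<And>x. x \<in> F \<Longrightarrow> x \<le> V"
    unfolding F_def V_def using ub_global[OF n N c d C dc uhU eps] by blast
  have marg: "\<exists>P. has_marginals n p j P" if f: "LP_feasible n N uL uU uh eps p q r" and j: "j \<in> {1..N}" for p q r j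
  proof (rule flow_decomp[OF n])
    show "\<forall>i\<in>{1..n}. (\<Sum>l=i..n+1. Psum p i l j) = 1" using f j unfolding LP_feasible_def by auto
    show "\<forall>k\<in>{1..n}. \<forall>l\<in>{k..n+1}. p k l j \<ge> 0" using f j unfolding LP_feasible_def by auto
  qed
  have lb: "\<exists>Q\<in>Dball n uL uU N uh eps. LP_obj n N c d C uL uU uh sbar p q r \<le> (\<integral>u. fval n c d C sbar u \<partial>Q)"
    if f: "LP_feasible n N uL uU uh eps p q r" for p q r
  proof -
    define Pt where "Pt j = (SOME P. has_marginals n p j P)" for j
    have hm: "\<forall>j\<in>{1..N}. has_marginals n p j (Pt j)"
      unfolding Pt_def using marg[OF f] by (auto intro: someI_ex)
    show ?thesis using qstar_thm(1)[OF n N c d C dc uhU f hm] qstar_thm(2)[where s=sbar, OF n N c d C dc uhU f hm] by blast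
  qed
  define p0 where "p0 k l j = (if l = n+1 then (if k = 1 then 1 else 0) else (0::real))" for k l j :: nat
  have f0: "LP_feasible n N uL uU uh eps p0 (\<lambda>_ _ _. 0) (\<lambda>_ _ _. 0)"
  proof -
    have Ps: "Psum p0 i l j = (if l = n+1 then 1 else 0)" if i: "i \<in> {1..n}" for i l j
      using i unfolding Psum_def p0_def by (cases "l = n+1") (auto simp: sum.delta)
    have "(\<Sum>l=i..n+1. Psum p0 i l j) = 1" if i: "i \<in> {1..n}" for i j
    proof -
      have "(\<Sum>l=i..n+1. Psum p0 i l j) = (\<Sum>l=i..n+1. if l = n+1 then 1 else 0)"
        using Ps[OF i] by (intro sum.cong) auto
      also have "\<dots> = 1" using i by (simp add: sum.delta')
      finally show ?thesis .
    qed
    moreover have "Psum p0 i l j \<ge> 0" if "i \<in> {1..n}" for i l j using Ps[OF that] by simp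
    ultimately show ?thesis unfolding LP_feasible_def using eps by (auto simp: p0_def)
  qed
  have Sne: "S \<noteq> {}" unfolding S_def using f0 by blast
  have Sbdd: "bdd_above S" unfolding S_def by (rule LP_bdd)
  have Fne: "F \<noteq> {}" unfolding F_def using lb[OF f0] by blast
  have Fbdd: "bdd_above F" using ub by (intro bdd_aboveI) blast
  have FV: "Sup F \<le> V" using Fne ub by (rule cSup_least)
  have VF: "V \<le> Sup F"
    unfolding V_def LP_val_def S_def[symmetric]
  proof (rule cSup_least[OF Sne])
    fix x assume "x \<in> S"
    then obtain p q r where x: "x = LP_obj n N c d C uL uU uh sbar p q r" and f: "LP_feasible n N uL uU uh eps p q r"
      unfolding S_def by blast
    obtain Q where Q: "Q \<in> Dball n uL uU N uh eps" and le: "x \<le> (\<integral>u. fval n c d C sbar u \<partial>Q)"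
      using lb[OF f] x by blast
    have "(\<integral>u. fval n c d C sbar u \<partial>Q) \<le> Sup F" unfolding F_def
      by (rule cSup_upper) (use Q Fbdd F_def in auto)
    thus "x \<le> Sup F" using le by linarith
  qed
  have eqSV: "Sup F = V" using FV VF by linarith
  show ?thesis
    unfolding F_def[symmetric] V_def[symmetric]
  proof (intro conjI allI impI ballI)
    show "Sup F = V" by (rule eqSV)
  next
    fix p q r j assume h: "LP_feasible n N uL uU uh eps p q r \<and> LP_obj n N c d C uL uU uh sbar p q r = V"
      and j: "j \<in> {1..N}"
    show "\<exists>P. has_marginals n p j P" using marg h j by blast
  next
    fix p q r Pt assume h: "LP_feasible n N uL uU uh eps p q r \<and> LP_obj n N c d C uL uU uh sbar p q r = V"
      and hm: "\<forall>j\<in>{1..N}. has_marginals n p j (Pt j)"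
    have f: "LP_feasible n N uL uU uh eps p q r" using h by blast
    note qs = qstar_thm(1)[OF n N c d C dc uhU f hm] qstar_thm(2)[where s=sbar, OF n N c d C dc uhU f hm]
    show "Qstar n N uL uU uh p q r Pt \<in> Dball n uL uU N uh eps" by (rule qs(1))
    have "(\<integral>u. fval n c d C sbar u \<partial>(Qstar n N uL uU uh p q r Pt)) \<le> Sup F"
      unfolding F_def by (rule cSup_upper) (use qs(1) Fbdd F_def in auto)
    moreover have "Sup F \<le> (\<integral>u. fval n c d C sbar u \<partial>(Qstar n N uL uU uh p q r Pt))"
      using qs(2) h eqSV by simp
    ultimately show "(\<integral>u. fval n c d C sbar u \<partial>(Qstar n N uL uU uh p q r Pt)) = Sup F" by linarith
  qed
qed


end
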